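(* Let $\Gamma\curvearrowright X, I$ be a dynamical ideal with permutation model $W[[X]]$. (1) If the dynamical ideal is $\sigma$-complete, then $W[[X]]$ satisfies the axiom of countable choice. (2) If the dynamical ideal is definably closed and $W[[X]]$ satisfies the axiom of countable choice, then the dynamical ideal is $\sigma$-complete.
   Context: Work in ZFC. $V[[X]]$ is the well-founded model of ZFCA with set of atoms exactly $X$ in which every set of elements is represented by an element; a group action of $\Gamma$ on $X$ extends to $V[[X]]$ by $\gamma\cdot A=\{\gamma\cdot B:B\in A\}$. $\mathrm{stab}(A)=\{\gamma:\gamma\cdot A=A\}$, $\mathrm{pstab}(a)=\{\gamma:\gamma\cdot B=B\ \forall B\in a\}$. A dynamical ideal $\Gamma\curvearrowright X, I$: a group $\Gamma$ acting on $X$ and a $\Gamma$-invariant ideal $I$ on $X$ containing all singletons. Its permutation model $W[[X]]$ is the class of $A\in V[[X]]$ such that $A$ and every element of its transitive closure are symmetric, where $A$ is symmetric if $\mathrm{pstab}(b)\subseteq\mathrm{stab}(A)$ for some $b\in I$. The axiom of countable choice: every countable family of nonempty sets has a choice function. The dynamical ideal is $\sigma$-complete if for every $a\in I$ and every sequence $\langle b_n:n\in\omega\rangle$ of sets in $I$ there are $\gamma_n\in\mathrm{pstab}(a)$ with $\bigcup_n\gamma_n\cdot b_n\in I$. A set $a\subseteq X$ is definably closed if for every $x\in X\setminus a$ there is $\gamma\in\mathrm{pstab}(a)$ with $\gamma\cdot x\neq x$; the dynamical ideal is definably closed if every set in $I$ is a subset of a definably closed set in $I$. *)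

theory Defs
  imports "HOL-Algebra.Group_Action"
begin

definition pstab :: "('g, 'm) monoid_scheme \<Rightarrow> ('g \<Rightarrow> 'x \<Rightarrow> 'x) \<Rightarrow> 'x set \<Rightarrow> 'g set" where
  "pstab G \<phi> a = {\<gamma> \<in> carrier G. \<forall>x\<in>a. \<phi> \<gamma> x = x}"

definition dyn_ideal :: "('g, 'm) monoid_scheme \<Rightarrow> 'x set \<Rightarrow> ('g \<Rightarrow> 'x \<Rightarrow> 'x) \<Rightarrow> 'x set set \<Rightarrow> bool" where
  "dyn_ideal G X \<phi> I \<longleftrightarrow>
     group_action G X \<phi> \<and>
     I \<subseteq> Pow X \<and> {} \<in> I \<and>
     (\<forall>a\<in>I. \<forall>b. b \<subseteq> a \<longrightarrow> b \<in> I) \<and>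
     (\<forall>a\<in>I. \<forall>b\<in>I. a \<union> b \<in> I) \<and>
     (\<forall>x\<in>X. {x} \<in> I) \<and>
     (\<forall>\<gamma>\<in>carrier G. \<forall>a\<in>I. \<phi> \<gamma> ` a \<in> I)"

definition sigma_complete :: "('g, 'm) monoid_scheme \<Rightarrow> ('g \<Rightarrow> 'x \<Rightarrow> 'x) \<Rightarrow> 'x set set \<Rightarrow> bool" where
  "sigma_complete G \<phi> I \<longleftrightarrow>
     (\<forall>a\<in>I. \<forall>b :: nat \<Rightarrow> 'x set. (\<forall>n. b n \<in> I) \<longrightarrow>
        (\<exists>\<gamma> :: nat \<Rightarrow> 'g. (\<forall>n. \<gamma> n \<in> pstab G \<phi> a) \<and> (\<Union>n. \<phi> (\<gamma> n) ` b n) \<in> I))"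

definition definably_closed_set :: "('g, 'm) monoid_scheme \<Rightarrow> 'x set \<Rightarrow> ('g \<Rightarrow> 'x \<Rightarrow> 'x) \<Rightarrow> 'x set \<Rightarrow> bool" where
  "definably_closed_set G X \<phi> a \<longleftrightarrow>
     (\<forall>x\<in>X - a. \<exists>\<gamma>\<in>pstab G \<phi> a. \<phi> \<gamma> x \<noteq> x)"

definition definably_closed :: "('g, 'm) monoid_scheme \<Rightarrow> 'x set \<Rightarrow> ('g \<Rightarrow> 'x \<Rightarrow> 'x) \<Rightarrow> 'x set set \<Rightarrow> bool" where
  "definably_closed G X \<phi> I \<longleftrightarrow>
     (\<forall>a\<in>I. \<exists>c\<in>I. a \<subseteq> c \<and> definably_closed_set G X \<phi> c)"

text \<open>A set is coded by a well-founded tree; a node lists its elements, indexed by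
  (some of) the elements of the type 'i. Equality of coded objects is extensional
  equality veq.\<close>

datatype ('x, 'i) vtree = Atom 'x | Node "'i \<Rightarrow> ('x, 'i) vtree option"

definition children :: "('x, 'i) vtree \<Rightarrow> ('x, 'i) vtree set" where
  "children t = (case t of Atom x \<Rightarrow> {} | Node f \<Rightarrow> {s. Some s \<in> range f})"

inductive veq :: "('x, 'i) vtree \<Rightarrow> ('x, 'i) vtree \<Rightarrow> bool" where
  veq_atom: "veq (Atom x) (Atom x)"
| veq_node: "(\<forall>s. s \<in> children (Node f) \<longrightarrow> (\<exists>t. t \<in> children (Node g) \<and> veq s t)) \<Longrightarrow>
             (\<forall>t. t \<in> children (Node g) \<longrightarrow> (\<exists>s. s \<in> children (Node f) \<and> veq s t)) \<Longrightarrow>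
             veq (Node f) (Node g)"

definition vmem :: "('x, 'i) vtree \<Rightarrow> ('x, 'i) vtree \<Rightarrow> bool" where
  "vmem s t \<longleftrightarrow> (\<exists>u\<in>children t. veq s u)"

definition isSet :: "('x, 'i) vtree \<Rightarrow> bool" where
  "isSet t \<longleftrightarrow> (\<exists>f. t = Node f)"

inductive vsub :: "('x, 'i) vtree \<Rightarrow> ('x, 'i) vtree \<Rightarrow> bool" where
  "s \<in> children t \<Longrightarrow> vsub s t"
| "vsub s u \<Longrightarrow> u \<in> children t \<Longrightarrow> vsub s t"

definition atoms_in :: "'x set \<Rightarrow> ('x, 'i) vtree \<Rightarrow> bool" where
  "atoms_in X t \<longleftrightarrow> (\<forall>x. (t = Atom x \<or> vsub (Atom x) t) \<longrightarrow> x \<in> X)"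

primrec vact :: "('g \<Rightarrow> 'x \<Rightarrow> 'x) \<Rightarrow> 'g \<Rightarrow> ('x, 'i) vtree \<Rightarrow> ('x, 'i) vtree" where
  "vact \<phi> \<gamma> (Atom x) = Atom (\<phi> \<gamma> x)"
| "vact \<phi> \<gamma> (Node f) = Node (\<lambda>i. map_option (vact \<phi> \<gamma>) (f i))"

definition vstab :: "('g, 'm) monoid_scheme \<Rightarrow> ('g \<Rightarrow> 'x \<Rightarrow> 'x) \<Rightarrow> ('x, 'i) vtree \<Rightarrow> 'g set" where
  "vstab G \<phi> A = {\<gamma> \<in> carrier G. veq (vact \<phi> \<gamma> A) A}"

definition symmetric :: "('g, 'm) monoid_scheme \<Rightarrow> ('g \<Rightarrow> 'x \<Rightarrow> 'x) \<Rightarrow> 'x set set \<Rightarrow> ('x, 'i) vtree \<Rightarrow> bool" where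
  "symmetric G \<phi> I A \<longleftrightarrow> (\<exists>b\<in>I. pstab G \<phi> b \<subseteq> vstab G \<phi> A)"

text \<open>membership in the permutation model W[[X]] (intersected with the hereditarily
  at most |'i| sets)\<close>
definition inW :: "('g, 'm) monoid_scheme \<Rightarrow> 'x set \<Rightarrow> ('g \<Rightarrow> 'x \<Rightarrow> 'x) \<Rightarrow> 'x set set \<Rightarrow> ('x, 'i) vtree \<Rightarrow> bool" where
  "inW G X \<phi> I A \<longleftrightarrow> atoms_in X A \<and> symmetric G \<phi> I A \<and> (\<forall>s. vsub s A \<longrightarrow> symmetric G \<phi> I s)"

definition is_upair :: "('x, 'i) vtree \<Rightarrow> ('x, 'i) vtree \<Rightarrow> ('x, 'i) vtree \<Rightarrow> bool" where
  "is_upair u a b \<longleftrightarrow> isSet u \<and> (\<forall>s. vmem s u \<longleftrightarrow> veq s a \<or> veq s b)"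

definition is_kpair :: "('x, 'i) vtree \<Rightarrow> ('x, 'i) vtree \<Rightarrow> ('x, 'i) vtree \<Rightarrow> bool" where
  "is_kpair p a b \<longleftrightarrow> isSet p \<and> (\<forall>s. vmem s p \<longleftrightarrow> is_upair s a a \<or> is_upair s a b)"

primrec is_vnat :: "nat \<Rightarrow> ('x, 'i) vtree \<Rightarrow> bool" where
  "is_vnat 0 t \<longleftrightarrow> isSet t \<and> (\<forall>s. \<not> vmem s t)"
| "is_vnat (Suc n) t \<longleftrightarrow> isSet t \<and>
     (\<forall>s. vmem s t \<longleftrightarrow> (is_vnat n s \<or> (\<exists>u. is_vnat n u \<and> vmem s u)))"

definition is_omega :: "('x, 'i) vtree \<Rightarrow> bool" where
  "is_omega w \<longleftrightarrow> isSet w \<and> (\<forall>s. vmem s w \<longleftrightarrow> (\<exists>n. is_vnat n s))"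

definition is_fun :: "('x, 'i) vtree \<Rightarrow> ('x, 'i) vtree \<Rightarrow> bool" where
  "is_fun g D \<longleftrightarrow> isSet g \<and>
     (\<forall>p. vmem p g \<longrightarrow> (\<exists>a b. is_kpair p a b \<and> vmem a D)) \<and>
     (\<forall>a. vmem a D \<longrightarrow> (\<exists>p b. vmem p g \<and> is_kpair p a b)) \<and>
     (\<forall>p p' a b b'. vmem p g \<and> vmem p' g \<and> is_kpair p a b \<and> is_kpair p' a b' \<longrightarrow> veq b b')"

definition countable_in_W :: "('g, 'm) monoid_scheme \<Rightarrow> 'x set \<Rightarrow> ('g \<Rightarrow> 'x \<Rightarrow> 'x) \<Rightarrow> 'x set set \<Rightarrow> ('x, 'i) vtree \<Rightarrow> bool" where
  "countable_in_W G X \<phi> I F \<longleftrightarrow>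
     (\<exists>g w. inW G X \<phi> I g \<and> is_omega w \<and> is_fun g F \<and>
        (\<forall>p a n. vmem p g \<and> is_kpair p a n \<longrightarrow> vmem n w) \<and>
        (\<forall>p p' a a' n. vmem p g \<and> vmem p' g \<and> is_kpair p a n \<and> is_kpair p' a' n \<longrightarrow> veq a a'))"

text \<open>The axiom of countable choice holds in the permutation model
  (restricted to codes with branching type 'i)\<close>
definition countable_choice_W :: "'i itself \<Rightarrow> ('g, 'm) monoid_scheme \<Rightarrow> 'x set \<Rightarrow> ('g \<Rightarrow> 'x \<Rightarrow> 'x) \<Rightarrow> 'x set set \<Rightarrow> bool" where
  "countable_choice_W _ G X \<phi> I \<longleftrightarrow>
     (\<forall>F :: ('x, 'i) vtree.
        inW G X \<phi> I F \<and> isSet F \<and> countable_in_W G X \<phi> I F \<and>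
        (\<forall>A. vmem A F \<longrightarrow> isSet A \<and> (\<exists>y. vmem y A)) \<longrightarrow>
        (\<exists>c. inW G X \<phi> I c \<and> is_fun c F \<and>
             (\<forall>p A y. vmem p c \<and> is_kpair p A y \<longrightarrow> vmem y A)))"

end

theory Submission
  imports Defs
begin


lemma children_Atom[simp]: "children (Atom x) = {}"
  by (simp add: children_def)

lemma children_Node: "children (Node f) = {s. Some s \<in> range f}"
  by (simp add: children_def)

lemma child_NodeI: "f i = Some u \<Longrightarrow> u \<in> children (Node f)"
  by (simp add: children_Node) (metis rangeI)

lemma child_NodeE: "u \<in> children (Node f) \<Longrightarrow> \<exists>i. f i = Some u"
  by (auto simp: children_Node)

lemma veq_Atom_iff[simp]: "veq (Atom x) t \<longleftrightarrow> t = Atom x"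
  by (auto elim: veq.cases intro: veq.intros)

lemma veq_Atom_iff2[simp]: "veq t (Atom x) \<longleftrightarrow> t = Atom x"
  by (auto elim: veq.cases intro: veq.intros)

lemma veq_NodeI:
  "(\<forall>s\<in>children (Node f). \<exists>u\<in>children (Node g). veq s u) \<Longrightarrow>
   (\<forall>u\<in>children (Node g). \<exists>s\<in>children (Node f). veq s u) \<Longrightarrow> veq (Node f) (Node g)"
  by (rule veq.intros) blast+

lemma veq_NodeE:
  assumes "veq (Node f) t"
  obtains g where "t = Node g" "\<forall>s\<in>children (Node f). \<exists>u\<in>children (Node g). veq s u"
      "\<forall>u\<in>children (Node g). \<exists>s\<in>children (Node f). veq s u"
  using assms by (cases rule: veq.cases) blast+

lemma veq_refl[simp, intro]: "veq t t"
proof (induction t)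
  case (Atom x) then show ?case by (rule veq.intros)
next
  case (Node f)
  have "\<And>u. u \<in> children (Node f) \<Longrightarrow> veq u u"
  proof -
    fix u assume "u \<in> children (Node f)"
    then obtain i where "f i = Some u" using child_NodeE by blast
    then show "veq u u" using Node.IH[of "f i" u] rangeI[of f i] by simp
  qed
  then show ?case by (intro veq_NodeI) blast+
qed

lemma veq_sym: "veq s t \<Longrightarrow> veq t s"
proof (induction rule: veq.induct)
  case (veq_atom x) then show ?case by simp
next
  case (veq_node f g)
  show ?case by (rule veq_NodeI) (use veq_node in blast)+
qed

lemma veq_trans: "veq s t \<Longrightarrow> veq t u \<Longrightarrow> veq s u"
proof (induction s arbitrary: t u)
  case (Atom x) then show ?case by simp
next
  case (Node f)
  from Node.prems(1) obtain g where g: "t = Node g"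
    "\<forall>s\<in>children (Node f). \<exists>u\<in>children (Node g). veq s u"
    "\<forall>u\<in>children (Node g). \<exists>s\<in>children (Node f). veq s u"
    by (rule veq_NodeE)
  from Node.prems(2) g(1) obtain h where h: "u = Node h"
    "\<forall>s\<in>children (Node g). \<exists>u\<in>children (Node h). veq s u"
    "\<forall>u\<in>children (Node h). \<exists>s\<in>children (Node g). veq s u"
    by (metis veq_NodeE)
  have IH: "\<And>s t u. s \<in> children (Node f) \<Longrightarrow> veq s t \<Longrightarrow> veq t u \<Longrightarrow> veq s u"
  proof -
    fix s t u assume "s \<in> children (Node f)" "veq s t" "veq t u"
    then obtain i where "f i = Some s" using child_NodeE by blast
    then show "veq s u" using Node.IH[of "f i" s] rangeI[of f i] \<open>veq s t\<close> \<open>veq t u\<close> by simp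
  qed
  have A: "\<forall>s\<in>children (Node f). \<exists>u\<in>children (Node h). veq s u"
  proof
    fix s assume s: "s \<in> children (Node f)"
    then obtain t' where "t' \<in> children (Node g)" "veq s t'" using g(2) by blast
    then obtain u' where "u' \<in> children (Node h)" "veq t' u'" using h(2) by blast
    then show "\<exists>u\<in>children (Node h). veq s u" using IH[OF s \<open>veq s t'\<close>] by blast
  qed
  have B: "\<forall>u\<in>children (Node h). \<exists>s\<in>children (Node f). veq s u"
  proof
    fix u assume "u \<in> children (Node h)"
    then obtain t' where "t' \<in> children (Node g)" "veq t' u" using h(3) by blast
    then obtain s where s: "s \<in> children (Node f)" "veq s t'" using g(3) by blast
    then show "\<exists>s\<in>children (Node f). veq s u" using IH[OF s(1) s(2) \<open>veq t' u\<close>] by blast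
  qed
  show ?case unfolding h(1) by (rule veq_NodeI[OF A B])
qed

lemma vsub_iff: "vsub s t \<longleftrightarrow> (\<exists>u\<in>children t. s = u \<or> vsub s u)"
proof
  assume "vsub s t" then show "\<exists>u\<in>children t. s = u \<or> vsub s u"
    by (cases rule: vsub.cases) blast+
next
  assume "\<exists>u\<in>children t. s = u \<or> vsub s u"
  then obtain u where "u \<in> children t" "s = u \<or> vsub s u" by blast
  then show "vsub s t" using vsub.intros by metis
qed

lemma vsub_Atom[simp]: "\<not> vsub s (Atom x)"
  by (subst vsub_iff) simp

lemma vsub_trans0: "vsub u t \<Longrightarrow> vsub s u \<Longrightarrow> vsub s t"
proof (induction u t rule: vsub.induct)
  case (1 s' t) then show ?case by (meson vsub.intros)
next
  case (2 s' u t) then show ?case by (meson vsub.intros)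
qed

lemma vsub_trans: "vsub s u \<Longrightarrow> vsub u t \<Longrightarrow> vsub s t"
  using vsub_trans0 by blast

lemma vsub_child: "u \<in> children t \<Longrightarrow> vsub u t"
  by (rule vsub.intros)

definition atoms :: "('x, 'i) vtree \<Rightarrow> 'x set" where
  "atoms t = {x. t = Atom x \<or> vsub (Atom x) t}"

lemma atoms_Atom[simp]: "atoms (Atom x) = {x}"
  by (auto simp: atoms_def)

lemma atoms_Node: "atoms (Node f) = \<Union> (atoms ` children (Node f))"
proof (rule Set.set_eqI)
  fix x
  have "x \<in> atoms (Node f) \<longleftrightarrow> vsub (Atom x) (Node f)" by (simp add: atoms_def)
  also have "\<dots> \<longleftrightarrow> (\<exists>u\<in>children (Node f). Atom x = u \<or> vsub (Atom x) u)" by (rule vsub_iff)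
  also have "\<dots> \<longleftrightarrow> x \<in> \<Union> (atoms ` children (Node f))" by (auto simp: atoms_def)
  finally show "x \<in> atoms (Node f) \<longleftrightarrow> x \<in> \<Union> (atoms ` children (Node f))" .
qed

lemma atoms_vsub: "vsub s t \<Longrightarrow> atoms s \<subseteq> atoms t"
  unfolding atoms_def using vsub_trans by blast

lemma atoms_child: "u \<in> children t \<Longrightarrow> atoms u \<subseteq> atoms t"
  using atoms_vsub vsub.intros(1) by blast

lemma atoms_in_iff: "atoms_in X t \<longleftrightarrow> atoms t \<subseteq> X"
  unfolding atoms_in_def atoms_def by blast


lemma children_vact: "children (vact \<phi> \<gamma> t) = vact \<phi> \<gamma> ` children t"
proof (cases t)
  case (Atom x) then show ?thesis by simp
next
  case (Node f)
  show ?thesis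
  proof (rule Set.set_eqI)
    fix s
    have "s \<in> children (vact \<phi> \<gamma> t) \<longleftrightarrow> (\<exists>i. map_option (vact \<phi> \<gamma>) (f i) = Some s)"
      unfolding Node vact.simps children_Node by (simp add: image_iff eq_commute)
    also have "\<dots> \<longleftrightarrow> (\<exists>i u. f i = Some u \<and> s = vact \<phi> \<gamma> u)"
      by (auto simp: map_option_eq_Some)
    also have "\<dots> \<longleftrightarrow> s \<in> vact \<phi> \<gamma> ` children t"
      unfolding Node children_Node by (simp add: image_iff) (metis rangeE rangeI)
    finally show "s \<in> children (vact \<phi> \<gamma> t) \<longleftrightarrow> s \<in> vact \<phi> \<gamma> ` children t" .
  qed
qed

lemma vact_cong:
  "(\<And>x. x \<in> atoms t \<Longrightarrow> \<phi> \<gamma> x = \<psi> \<delta> x) \<Longrightarrow> vact \<phi> \<gamma> t = vact \<psi> \<delta> t"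
proof (induction t)
  case (Atom x) then show ?case by simp
next
  case (Node f)
  have "\<And>i. map_option (vact \<phi> \<gamma>) (f i) = map_option (vact \<psi> \<delta>) (f i)"
  proof -
    fix i show "map_option (vact \<phi> \<gamma>) (f i) = map_option (vact \<psi> \<delta>) (f i)"
    proof (cases "f i")
      case (Some u)
      then have "u \<in> children (Node f)" by (rule child_NodeI)
      then have "atoms u \<subseteq> atoms (Node f)" by (rule atoms_child)
      then show ?thesis using Node.IH[of "f i" u] Node.prems Some rangeI[of f i] by auto
    qed simp
  qed
  then show ?case by simp
qed

lemma vact_fix: "(\<And>x. x \<in> atoms t \<Longrightarrow> \<phi> \<gamma> x = x) \<Longrightarrow> vact \<phi> \<gamma> t = t"
proof (induction t)
  case (Atom x) then show ?case by simp
next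
  case (Node f)
  have "\<And>i. map_option (vact \<phi> \<gamma>) (f i) = f i"
  proof -
    fix i show "map_option (vact \<phi> \<gamma>) (f i) = f i"
    proof (cases "f i")
      case (Some u)
      then have "u \<in> children (Node f)" by (rule child_NodeI)
      then have "atoms u \<subseteq> atoms (Node f)" by (rule atoms_child)
      then show ?thesis using Node.IH[of "f i" u] Node.prems Some rangeI[of f i] by auto
    qed simp
  qed
  then show ?case by simp
qed

lemma atoms_vact: "atoms (vact \<phi> \<gamma> t) = \<phi> \<gamma> ` atoms t"
proof (induction t)
  case (Atom x) then show ?case by simp
next
  case (Node f)
  have ch: "\<And>u. u \<in> children (Node f) \<Longrightarrow> atoms (vact \<phi> \<gamma> u) = \<phi> \<gamma> ` atoms u"
  proof -
    fix u assume "u \<in> children (Node f)"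
    then obtain i where "f i = Some u" using child_NodeE by blast
    then show "atoms (vact \<phi> \<gamma> u) = \<phi> \<gamma> ` atoms u" using Node.IH[of "f i" u] rangeI[of f i] by simp
  qed
  have "atoms (vact \<phi> \<gamma> (Node f)) = \<Union> (atoms ` children (vact \<phi> \<gamma> (Node f)))"
    by (simp add: atoms_Node[symmetric])
  also have "\<dots> = \<Union> (atoms ` vact \<phi> \<gamma> ` children (Node f))"
    by (simp only: children_vact)
  also have "\<dots> = \<Union> ((\<lambda>u. \<phi> \<gamma> ` atoms u) ` children (Node f))"
    by (simp add: image_image ch)
  also have "\<dots> = \<phi> \<gamma> ` atoms (Node f)" by (auto simp: atoms_Node)
  finally show ?case .
qed

lemma vact_comp:
  "(\<And>x. x \<in> atoms t \<Longrightarrow> \<phi> \<gamma> (\<phi> \<delta> x) = \<phi> \<epsilon> x) \<Longrightarrow> vact \<phi> \<gamma> (vact \<phi> \<delta> t) = vact \<phi> \<epsilon> t"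
proof (induction t)
  case (Atom x) then show ?case by simp
next
  case (Node f)
  have "\<And>i. map_option (vact \<phi> \<gamma>) (map_option (vact \<phi> \<delta>) (f i)) = map_option (vact \<phi> \<epsilon>) (f i)"
  proof -
    fix i show "map_option (vact \<phi> \<gamma>) (map_option (vact \<phi> \<delta>) (f i)) = map_option (vact \<phi> \<epsilon>) (f i)"
    proof (cases "f i")
      case (Some u)
      then have "u \<in> children (Node f)" by (rule child_NodeI)
      then have "atoms u \<subseteq> atoms (Node f)" by (rule atoms_child)
      then show ?thesis using Node.IH[of "f i" u] Node.prems Some rangeI[of f i] by auto
    qed simp
  qed
  then show ?case by (simp add: option.map_comp comp_def)
qed

lemma veq_byI: "isSet s \<Longrightarrow> isSet t \<Longrightarrow> (\<forall>u\<in>children s. \<exists>v\<in>children t. veq u v) \<Longrightarrow>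
   (\<forall>v\<in>children t. \<exists>u\<in>children s. veq u v) \<Longrightarrow> veq s t"
  unfolding isSet_def using veq_NodeI by blast

lemma isSet_vact[simp]: "isSet (vact \<phi> \<gamma> t) = isSet t"
  unfolding isSet_def by (cases t) auto

lemma veq_vact: "veq s t \<Longrightarrow> veq (vact \<phi> \<gamma> s) (vact \<phi> \<gamma> t)"
proof (induction rule: veq.induct)
  case (veq_atom x) then show ?case by simp
next
  case (veq_node f g)
  have cf: "children (vact \<phi> \<gamma> (Node f)) = vact \<phi> \<gamma> ` children (Node f)" by (rule children_vact)
  have cg: "children (vact \<phi> \<gamma> (Node g)) = vact \<phi> \<gamma> ` children (Node g)" by (rule children_vact)
  show ?case
  proof (rule veq_byI)
    show "isSet (vact \<phi> \<gamma> (Node f))" "isSet (vact \<phi> \<gamma> (Node g))" by (simp_all add: isSet_def)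
    show "\<forall>u\<in>children (vact \<phi> \<gamma> (Node f)). \<exists>v\<in>children (vact \<phi> \<gamma> (Node g)). veq u v"
      unfolding cf cg using veq_node(1) by blast
    show "\<forall>v\<in>children (vact \<phi> \<gamma> (Node g)). \<exists>u\<in>children (vact \<phi> \<gamma> (Node f)). veq u v"
      unfolding cf cg using veq_node(2) by blast
  qed
qed

lemma vsub_vact: "vsub s (vact \<phi> \<gamma> t) \<Longrightarrow> \<exists>s0. vsub s0 t \<and> s = vact \<phi> \<gamma> s0"
proof (induction t arbitrary: s)
  case (Atom x) then show ?case by simp
next
  case (Node f)
  from Node.prems obtain u where u: "u \<in> children (Node f)"
    "s = vact \<phi> \<gamma> u \<or> vsub s (vact \<phi> \<gamma> u)"
    using vsub_iff[of s "vact \<phi> \<gamma> (Node f)"] children_vact[of \<phi> \<gamma> "Node f"] by auto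
  have IH: "vsub s (vact \<phi> \<gamma> u) \<Longrightarrow> \<exists>s0. vsub s0 u \<and> s = vact \<phi> \<gamma> s0"
  proof -
    obtain i where "f i = Some u" using child_NodeE u(1) by blast
    then show "vsub s (vact \<phi> \<gamma> u) \<Longrightarrow> \<exists>s0. vsub s0 u \<and> s = vact \<phi> \<gamma> s0"
      using Node.IH[of "f i" u] rangeI[of f i] by simp
  qed
  show ?case using u IH vsub.intros(1)[OF u(1)] vsub.intros(2)[OF _ u(1)] by blast
qed


lemma vmem_child: "u \<in> children t \<Longrightarrow> vmem u t"
  unfolding vmem_def by blast

lemma vmem_veq1: "veq a a' \<Longrightarrow> vmem a t \<Longrightarrow> vmem a' t"
  unfolding vmem_def by (meson veq_sym veq_trans)

lemma vmem_veq2: "veq t t' \<Longrightarrow> vmem a t \<Longrightarrow> vmem a t'"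
proof (cases t)
  case (Atom x)
  assume "vmem a t" then show ?thesis by (simp add: vmem_def Atom)
next
  case (Node f)
  assume "veq t t'" "vmem a t"
  then obtain g where "t' = Node g" "\<forall>s\<in>children (Node f). \<exists>u\<in>children (Node g). veq s u"
    using Node veq_NodeE by metis
  then show ?thesis using \<open>vmem a t\<close> unfolding vmem_def Node by (meson veq_trans)
qed

lemma vmem_vact: "vmem a t \<Longrightarrow> vmem (vact \<phi> \<gamma> a) (vact \<phi> \<gamma> t)"
  unfolding vmem_def children_vact by (blast intro: veq_vact)

lemma isSet_veq: "veq s t \<Longrightarrow> isSet s \<Longrightarrow> isSet t"
  unfolding isSet_def by (metis veq_NodeE)

lemma veq_ext: "isSet s \<Longrightarrow> isSet t \<Longrightarrow> (\<And>x. vmem x s \<longleftrightarrow> vmem x t) \<Longrightarrow> veq s t"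
proof -
  assume "isSet s" "isSet t" and m: "\<And>x. vmem x s \<longleftrightarrow> vmem x t"
  then obtain f g where fg: "s = Node f" "t = Node g" unfolding isSet_def by blast
  show "veq s t" unfolding fg
  proof (rule veq_NodeI)
    show "\<forall>u\<in>children (Node f). \<exists>v\<in>children (Node g). veq u v"
      using m unfolding fg vmem_def by blast
    show "\<forall>v\<in>children (Node g). \<exists>u\<in>children (Node f). veq u v"
    proof
      fix v assume "v \<in> children (Node g)"
      then have "vmem v s" using m[of v] unfolding fg vmem_def by blast
      then obtain u where "u \<in> children (Node f)" "veq v u" unfolding fg vmem_def by blast
      then show "\<exists>u\<in>children (Node f). veq u v" using veq_sym by blast
    qed
  qed
qed

lemma veq_iff_mem: "isSet t \<Longrightarrow> veq u t \<longleftrightarrow> isSet u \<and> (\<forall>s. vmem s u \<longleftrightarrow> vmem s t)"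
  by (meson isSet_veq veq_ext veq_sym vmem_veq2)

lemma not_vmem_self: "\<not> vmem t t"
proof (induction t)
  case (Atom x) then show ?case by (simp add: vmem_def)
next
  case (Node f)
  show ?case
  proof
    assume "vmem (Node f) (Node f)"
    then obtain u where u: "u \<in> children (Node f)" "veq (Node f) u" unfolding vmem_def by blast
    from u(1) have "vmem u (Node f)" by (rule vmem_child)
    then have "vmem u u" using u(2) vmem_veq2 by blast
    moreover obtain i where "f i = Some u" using child_NodeE u(1) by blast
    ultimately show False using Node.IH[of "f i" u] rangeI[of f i] by simp
  qed
qed


definition up :: "('x, 'i) vtree \<Rightarrow> ('x, 'i) vtree \<Rightarrow> ('x, 'i) vtree" where
  "up a b = Node (\<lambda>i. Some (if i = undefined then a else b))"

definition kp :: "('x, 'i) vtree \<Rightarrow> ('x, 'i) vtree \<Rightarrow> ('x, 'i) vtree" where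
  "kp a b = up (up a a) (up a b)"

lemma isSet_up[simp]: "isSet (up a b)" by (simp add: up_def isSet_def)
lemma isSet_kp[simp]: "isSet (kp a b)" by (simp add: kp_def)

lemma children_up:
  assumes "infinite (UNIV :: 'i set)"
  shows "children (up a b :: ('x, 'i) vtree) = {a, b}"
proof -
  obtain j :: 'i where j: "j \<noteq> undefined"
  proof -
    have "UNIV \<noteq> {undefined :: 'i}" using assms by (metis finite.emptyI finite_insert)
    then show ?thesis using that by blast
  qed
  have "children (up a b :: ('x, 'i) vtree) = {s. \<exists>i::'i. s = (if i = undefined then a else b)}"
    unfolding up_def children_Node by (auto simp: image_iff)
  also have "\<dots> = {a, b}"
  proof (rule Set.set_eqI)
    fix s show "s \<in> {s. \<exists>i::'i. s = (if i = undefined then a else b)} \<longleftrightarrow> s \<in> {a, b}"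
    proof
      assume "s \<in> {s. \<exists>i::'i. s = (if i = undefined then a else b)}" then show "s \<in> {a, b}"
        by (auto split: if_splits)
    next
      assume "s \<in> {a, b}"
      then have "s = (if undefined = (undefined::'i) then a else b) \<or> s = (if j = undefined then a else b)"
        using j by auto
      then show "s \<in> {s. \<exists>i::'i. s = (if i = undefined then a else b)}" by blast
    qed
  qed
  finally show ?thesis .
qed

lemma vmem_up:
  assumes "infinite (UNIV :: 'i set)"
  shows "vmem s (up a b :: ('x, 'i) vtree) \<longleftrightarrow> veq s a \<or> veq s b"
  unfolding vmem_def children_up[OF assms] by blast

lemma vact_up: "vact \<phi> \<gamma> (up a b) = up (vact \<phi> \<gamma> a) (vact \<phi> \<gamma> b)"
  by (simp add: up_def fun_eq_iff)

lemma vact_kp: "vact \<phi> \<gamma> (kp a b) = kp (vact \<phi> \<gamma> a) (vact \<phi> \<gamma> b)"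
  by (simp add: kp_def vact_up)

lemma is_upair_iff:
  assumes "infinite (UNIV :: 'i set)"
  shows "is_upair u a b \<longleftrightarrow> veq u (up a b :: ('x, 'i) vtree)"
  unfolding is_upair_def veq_iff_mem[OF isSet_up] vmem_up[OF assms] by blast

lemma vmem_kp:
  assumes "infinite (UNIV :: 'i set)"
  shows "vmem s (kp a b :: ('x, 'i) vtree) \<longleftrightarrow> veq s (up a a) \<or> veq s (up a b)"
  unfolding kp_def vmem_up[OF assms] by blast

lemma is_kpair_iff:
  assumes "infinite (UNIV :: 'i set)"
  shows "is_kpair p a b \<longleftrightarrow> veq p (kp a b :: ('x, 'i) vtree)"
  unfolding is_kpair_def veq_iff_mem[OF isSet_kp] vmem_kp[OF assms] is_upair_iff[OF assms] by blast

lemma up_cong: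
  assumes "infinite (UNIV :: 'i set)" "veq a a'" "veq b b'"
  shows "veq (up a b) (up a' b' :: ('x, 'i) vtree)"
proof -
  have "\<And>s. vmem s (up a b :: ('x, 'i) vtree) \<longleftrightarrow> vmem s (up a' b' :: ('x, 'i) vtree)"
    unfolding vmem_up[OF assms(1)] using assms(2,3) by (meson veq_sym veq_trans)
  then show ?thesis by (simp add: veq_iff_mem)
qed

lemma kp_cong:
  assumes "infinite (UNIV :: 'i set)" "veq a a'" "veq b b'"
  shows "veq (kp a b) (kp a' b' :: ('x, 'i) vtree)"
  unfolding kp_def using assms by (simp add: up_cong)

lemma up_inj:
  assumes inf: "infinite (UNIV :: 'i set)" and e: "veq (up a b) (up c d :: ('x, 'i) vtree)"
  shows "(veq a c \<and> veq b d) \<or> (veq a d \<and> veq b c)"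
proof -
  have m: "\<And>s. (veq s a \<or> veq s b) \<longleftrightarrow> (veq s c \<or> veq s d)"
    using e vmem_up[OF inf] by (metis veq_iff_mem isSet_up)
  have ac: "veq a c \<or> veq a d" using m[of a] by simp
  have bc: "veq b c \<or> veq b d" using m[of b] by simp
  have ca: "veq c a \<or> veq c b" using m[of c] by simp
  have da: "veq d a \<or> veq d b" using m[of d] by simp
  show ?thesis
  proof (cases "veq a c")
    case True
    show ?thesis
    proof (cases "veq b d")
      case True with \<open>veq a c\<close> show ?thesis by blast
    next
      case False
      then have "veq b c" using bc by blast
      have "veq d a" using da False veq_sym by blast
      then show ?thesis using \<open>veq b c\<close> veq_sym by blast
    qed
  next
    case False
    then have "veq a d" using ac by blast
    have "veq c b" using ca False veq_sym by blast
    then show ?thesis using \<open>veq a d\<close> veq_sym by blast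
  qed
qed

lemma kp_inj:
  assumes inf: "infinite (UNIV :: 'i set)" and e: "veq (kp a b) (kp c d :: ('x, 'i) vtree)"
  shows "veq a c \<and> veq b d"
proof -
  have "(veq (up a a) (up c c) \<and> veq (up a b) (up c d)) \<or> (veq (up a a) (up c d) \<and> veq (up a b) (up c c))"
    using up_inj[OF inf] e unfolding kp_def by blast
  then show ?thesis
  proof
    assume h: "veq (up a a) (up c c) \<and> veq (up a b) (up c d)"
    then have "veq a c" using up_inj[OF inf] by blast
    from h have "(veq a c \<and> veq b d) \<or> (veq a d \<and> veq b c)" using up_inj[OF inf] by blast
    then show ?thesis
    proof
      assume "veq a d \<and> veq b c"
      then have "veq b d" using \<open>veq a c\<close> by (meson veq_sym veq_trans)
      then show ?thesis using \<open>veq a c\<close> by blast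
    qed blast
  next
    assume h: "veq (up a a) (up c d) \<and> veq (up a b) (up c c)"
    then have "veq a c" "veq a d" using up_inj[OF inf] by blast+
    moreover from h have "veq b c" using up_inj[OF inf] by blast
    ultimately show ?thesis by (meson veq_sym veq_trans)
  qed
qed

lemma is_kpair_cong:
  assumes "infinite (UNIV :: 'i set)" "is_kpair p a b" "veq p p'" "veq a a'" "veq b b'"
  shows "is_kpair p' a' (b' :: ('x, 'i) vtree)"
proof -
  have "veq p (kp a b)" using assms(1,2) is_kpair_iff by blast
  moreover have "veq (kp a b) (kp a' b')" using kp_cong assms by blast
  ultimately show ?thesis using assms(1,3) is_kpair_iff by (meson veq_sym veq_trans)
qed

lemma is_kpair_inj:
  assumes "infinite (UNIV :: 'i set)" "is_kpair p a b" "is_kpair p a' (b' :: ('x, 'i) vtree)"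
  shows "veq a a' \<and> veq b b'"
proof -
  have "veq (kp a b) (kp a' b')" using assms is_kpair_iff by (meson veq_sym veq_trans)
  then show ?thesis using kp_inj assms(1) by blast
qed

lemma is_kpair_vact:
  assumes "infinite (UNIV :: 'i set)" "is_kpair p a (b :: ('x, 'i) vtree)"
  shows "is_kpair (vact \<phi> \<gamma> p) (vact \<phi> \<gamma> a) (vact \<phi> \<gamma> b)"
  using assms is_kpair_iff veq_vact vact_kp by metis

lemma is_kpair_kp:
  assumes "infinite (UNIV :: 'i set)"
  shows "is_kpair (kp a b) a (b :: ('x, 'i) vtree)"
  using assms is_kpair_iff by blast

lemma children_kp:
  assumes "infinite (UNIV :: 'i set)"
  shows "children (kp a b :: ('x, 'i) vtree) = {up a a, up a b}"
  unfolding kp_def children_up[OF assms] ..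

definition img :: "('a \<Rightarrow> 'i) \<Rightarrow> 'a set \<Rightarrow> ('a \<Rightarrow> ('x, 'i) vtree) \<Rightarrow> ('x, 'i) vtree" where
  "img \<iota> S t = Node (\<lambda>i. if i \<in> \<iota> ` S then Some (t (inv_into S \<iota> i)) else None)"

lemma isSet_img[simp]: "isSet (img \<iota> S t)" by (simp add: img_def isSet_def)

lemma children_img:
  assumes "inj_on \<iota> S"
  shows "children (img \<iota> S t) = t ` S"
proof (rule Set.set_eqI)
  fix s
  show "s \<in> children (img \<iota> S t) \<longleftrightarrow> s \<in> t ` S"
  proof
    assume "s \<in> children (img \<iota> S t)"
    from child_NodeE[OF this[unfolded img_def]]
    obtain i where "(if i \<in> \<iota> ` S then Some (t (inv_into S \<iota> i)) else None) = Some s"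
      by blast
    then have "i \<in> \<iota> ` S" "s = t (inv_into S \<iota> i)" by (auto split: if_splits)
    then show "s \<in> t ` S" by (simp add: inv_into_into)
  next
    assume "s \<in> t ` S"
    then obtain x where x: "x \<in> S" "s = t x" by blast
    then have "(if \<iota> x \<in> \<iota> ` S then Some (t (inv_into S \<iota> (\<iota> x))) else None) = Some s"
      using assms by simp
    then show "s \<in> children (img \<iota> S t)" unfolding img_def by (rule child_NodeI)
  qed
qed

lemma vact_img: "vact \<phi> \<gamma> (img \<iota> S t) = img \<iota> S (\<lambda>x. vact \<phi> \<gamma> (t x))"
  by (simp add: img_def fun_eq_iff)

lemma img_cong: "(\<And>x. x \<in> S \<Longrightarrow> t x = t' x) \<Longrightarrow> img \<iota> S t = img \<iota> S t'"
  unfolding img_def by (metis (no_types, lifting) image_iff inv_into_into)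

definition ordw :: "('a \<times> 'a) set \<Rightarrow> ('a \<Rightarrow> 'i) \<Rightarrow> 'a \<Rightarrow> ('x, 'i) vtree" where
  "ordw R \<iota> = wfrec R (\<lambda>rec x. img \<iota> {y. (y, x) \<in> R} rec)"

lemma ordw_eq: "wf R \<Longrightarrow> ordw R \<iota> x = img \<iota> {y. (y, x) \<in> R} (ordw R \<iota>)"
  unfolding ordw_def by (subst wfrec) (auto intro!: img_cong simp: cut_apply)

lemma children_ordw:
  "wf R \<Longrightarrow> inj \<iota> \<Longrightarrow> children (ordw R \<iota> x) = ordw R \<iota> ` {y. (y, x) \<in> R}"
proof -
  assume "wf R" "inj \<iota>"
  have "inj_on \<iota> {y. (y, x) \<in> R}" using \<open>inj \<iota>\<close> inj_on_subset by blast
  then show ?thesis by (subst ordw_eq[OF \<open>wf R\<close>]) (rule children_img)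
qed

lemma isSet_ordw: "wf R \<Longrightarrow> isSet (ordw R \<iota> x)"
  by (subst ordw_eq) auto

lemma atoms_ordw:
  assumes "wf R" "inj \<iota>"
  shows "atoms (ordw R \<iota> x :: ('x, 'i) vtree) = {}"
  using assms(1)
proof (induction x rule: wf_induct_rule)
  case (less x)
  obtain f where f: "ordw R \<iota> x = (Node f :: ('x, 'i) vtree)"
    using isSet_ordw[OF assms(1)] unfolding isSet_def by blast
  have "atoms (ordw R \<iota> x :: ('x, 'i) vtree) = \<Union> (atoms ` children (ordw R \<iota> x :: ('x, 'i) vtree))"
    unfolding f by (rule atoms_Node)
  also have "\<dots> = {}" unfolding children_ordw[OF assms] using less by auto
  finally show ?case .
qed

lemma vact_ordw: "wf R \<Longrightarrow> inj \<iota> \<Longrightarrow> vact \<phi> \<gamma> (ordw R \<iota> x) = ordw R \<iota> x"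
  by (rule vact_fix) (simp add: atoms_ordw)

lemma ordw_lt:
  assumes "wf R" "inj \<iota>" "(y, x) \<in> R"
  shows "\<not> veq (ordw R \<iota> x) (ordw R \<iota> y :: ('x, 'i) vtree)"
proof
  assume e: "veq (ordw R \<iota> x) (ordw R \<iota> y :: ('x, 'i) vtree)"
  have "(ordw R \<iota> y :: ('x, 'i) vtree) \<in> children (ordw R \<iota> x)"
    unfolding children_ordw[OF assms(1,2)] using assms(3) by blast
  then have "vmem (ordw R \<iota> y :: ('x, 'i) vtree) (ordw R \<iota> x)" by (rule vmem_child)
  then have "vmem (ordw R \<iota> y :: ('x, 'i) vtree) (ordw R \<iota> y)" using e vmem_veq2 by blast
  then show False using not_vmem_self by blast
qed


definition vn :: "(nat \<Rightarrow> 'i) \<Rightarrow> nat \<Rightarrow> ('x, 'i) vtree" where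
  "vn \<nu> = ordw {(j, k). j < k} \<nu>"

lemma children_vn: "inj \<nu> \<Longrightarrow> children (vn \<nu> k) = vn \<nu> ` {..<k}"
  unfolding vn_def by (subst children_ordw[OF wf_less]) auto

lemma isSet_vn[simp]: "isSet (vn \<nu> k)"
  unfolding vn_def by (rule isSet_ordw[OF wf_less])

lemma atoms_vn: "inj \<nu> \<Longrightarrow> atoms (vn \<nu> k) = {}"
  unfolding vn_def by (rule atoms_ordw[OF wf_less])

lemma vact_vn: "inj \<nu> \<Longrightarrow> vact \<phi> \<gamma> (vn \<nu> k) = vn \<nu> k"
  unfolding vn_def by (rule vact_ordw[OF wf_less])

lemma vn_inj: assumes "inj \<nu>" "veq (vn \<nu> j) (vn \<nu> k :: ('x, 'i) vtree)" shows "j = k"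
proof (rule ccontr)
  assume "j \<noteq> k"
  then consider "j < k" | "k < j" by linarith
  then show False
  proof cases
    case 1
    then have "\<not> veq (vn \<nu> k) (vn \<nu> j :: ('x, 'i) vtree)"
      unfolding vn_def using ordw_lt[OF wf_less assms(1)] by blast
    then show False using assms(2) veq_sym by blast
  next
    case 2
    then show False
      using assms(2) unfolding vn_def using ordw_lt[OF wf_less assms(1)] by blast
  qed
qed

lemma vmem_vn: assumes "inj \<nu>" shows "vmem s (vn \<nu> k) \<longleftrightarrow> (\<exists>j<k. veq s (vn \<nu> j))"
proof
  assume "vmem s (vn \<nu> k)"
  then obtain u where u: "u \<in> vn \<nu> ` {..<k}" "veq s u" unfolding vmem_def children_vn[OF assms] by blast
  from u(1) obtain j where "j < k" "u = vn \<nu> j" by auto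
  then show "\<exists>j<k. veq s (vn \<nu> j)" using u(2) by blast
next
  assume "\<exists>j<k. veq s (vn \<nu> j)"
  then obtain j where "j < k" "veq s (vn \<nu> j)" by blast
  moreover have "vn \<nu> j \<in> children (vn \<nu> k)" using \<open>j < k\<close> children_vn[OF assms] by auto
  ultimately show "vmem s (vn \<nu> k)" unfolding vmem_def by blast
qed

lemma is_vnat_iff: assumes "inj \<nu>" shows "is_vnat k t \<longleftrightarrow> veq t (vn \<nu> k)"
proof (induction k arbitrary: t)
  case 0
  have "\<forall>s. \<not> vmem s (vn \<nu> 0)" using vmem_vn[OF assms] by blast
  then show ?case unfolding is_vnat.simps veq_iff_mem[OF isSet_vn[of \<nu> 0], of t] by blast
next
  case (Suc k)
  have a: "\<And>s. (\<exists>u. veq u (vn \<nu> k) \<and> vmem s u) \<longleftrightarrow> vmem s (vn \<nu> k)"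
    by (meson veq_refl veq_sym vmem_veq2)
  have b: "\<And>s. vmem s (vn \<nu> (Suc k)) \<longleftrightarrow> veq s (vn \<nu> k) \<or> vmem s (vn \<nu> k)"
    unfolding vmem_vn[OF assms] using less_Suc_eq by auto
  have "is_vnat (Suc k) t \<longleftrightarrow> isSet t \<and> (\<forall>s. vmem s t \<longleftrightarrow> veq s (vn \<nu> k) \<or> vmem s (vn \<nu> k))"
    unfolding is_vnat.simps Suc.IH a ..
  also have "\<dots> \<longleftrightarrow> veq t (vn \<nu> (Suc k))"
    unfolding veq_iff_mem[OF isSet_vn[of \<nu> "Suc k"], of t] b ..
  finally show ?case .
qed

definition omg :: "(nat \<Rightarrow> 'i) \<Rightarrow> ('x, 'i) vtree" where
  "omg \<nu> = img \<nu> UNIV (vn \<nu>)"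

lemma is_omega_omg: assumes "inj \<nu>" shows "is_omega (omg \<nu> :: ('x, 'i) vtree)"
proof -
  have "\<And>s. vmem s (omg \<nu> :: ('x, 'i) vtree) \<longleftrightarrow> (\<exists>k. veq s (vn \<nu> k))"
    unfolding omg_def vmem_def children_img[OF inj_on_subset[OF assms subset_UNIV]] by blast
  then show ?thesis unfolding is_omega_def is_vnat_iff[OF assms] by (simp add: omg_def del: vmem_def)
qed

lemma is_vnat_vact: fixes \<nu> :: "nat \<Rightarrow> 'i" and t :: "('x, 'i) vtree" assumes "inj \<nu>" "is_vnat k t" shows "veq (vact \<phi> \<gamma> t) t"
proof -
  have e: "veq t (vn \<nu> k)" using assms is_vnat_iff by blast
  have "veq (vact \<phi> \<gamma> t) (vact \<phi> \<gamma> (vn \<nu> k))" using e by (rule veq_vact)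
  moreover have "vact \<phi> \<gamma> (vn \<nu> k) = (vn \<nu> k :: ('x, 'i) vtree)" by (rule vact_vn[OF assms(1)])
  ultimately have "veq (vact \<phi> \<gamma> t) (vn \<nu> k)" by simp
  then show ?thesis by (rule veq_trans[OF _ veq_sym[OF e]])
qed

lemma vmem_omg_vact: "inj (\<nu> :: nat \<Rightarrow> 'i) \<Longrightarrow> is_omega (w :: ('x, 'i) vtree) \<Longrightarrow> vmem n w \<Longrightarrow> veq (vact \<phi> \<gamma> n) n"
proof -
  assume a: "inj \<nu>" "is_omega w" "vmem n w"
  then obtain k where "is_vnat k n" unfolding is_omega_def by blast
  then show ?thesis by (rule is_vnat_vact[OF a(1)])
qed

lemma ga_group: "group_action G X \<phi> \<Longrightarrow> group G"
  using group_action.group_hom group_hom.axioms(1) by blast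

lemma pstab_carrier: "\<gamma> \<in> pstab G \<phi> b \<Longrightarrow> \<gamma> \<in> carrier G"
  by (simp add: pstab_def)

lemma pstab_fix: "\<gamma> \<in> pstab G \<phi> b \<Longrightarrow> x \<in> b \<Longrightarrow> \<phi> \<gamma> x = x"
  by (simp add: pstab_def)

lemma pstab_anti: "b \<subseteq> b' \<Longrightarrow> pstab G \<phi> b' \<subseteq> pstab G \<phi> b"
  by (auto simp: pstab_def)

lemma phi_one: "group_action G X \<phi> \<Longrightarrow> x \<in> X \<Longrightarrow> \<phi> \<one>\<^bsub>G\<^esub> x = x"
  using group_action.id_eq_one by (metis restrict_apply')

lemma one_pstab: assumes "group_action G X \<phi>" "b \<subseteq> X" shows "\<one>\<^bsub>G\<^esub> \<in> pstab G \<phi> b"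
proof -
  interpret group G using ga_group[OF assms(1)] .
  show ?thesis unfolding pstab_def using phi_one[OF assms(1)] assms(2) by auto
qed

lemma mult_pstab:
  assumes "group_action G X \<phi>" "b \<subseteq> X" "\<gamma> \<in> pstab G \<phi> b" "\<delta> \<in> pstab G \<phi> b"
  shows "\<gamma> \<otimes>\<^bsub>G\<^esub> \<delta> \<in> pstab G \<phi> b"
proof -
  interpret group G using ga_group[OF assms(1)] .
  show ?thesis using assms unfolding pstab_def
    by (auto simp: group_action.composition_rule[OF assms(1)])
qed

lemma conj_fix:
  assumes ga: "group_action G X \<phi>" and g: "\<gamma> \<in> carrier G" and tX: "atoms t \<subseteq> X" and bX: "b \<subseteq> X"
    and fx: "\<forall>\<delta>\<in>pstab G \<phi> b. veq (vact \<phi> \<delta> t) t"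
    and d: "\<delta> \<in> pstab G \<phi> (\<phi> \<gamma> ` b)"
  shows "veq (vact \<phi> \<delta> (vact \<phi> \<gamma> t)) (vact \<phi> \<gamma> t)"
proof -
  interpret group G using ga_group[OF ga] .
  have dc: "\<delta> \<in> carrier G" by (rule pstab_carrier[OF d])
  define d' where "d' = inv\<^bsub>G\<^esub> \<gamma> \<otimes>\<^bsub>G\<^esub> (\<delta> \<otimes>\<^bsub>G\<^esub> \<gamma>)"
  have d'c: "d' \<in> carrier G" unfolding d'_def using g dc by simp
  have "d' \<in> pstab G \<phi> b"
    unfolding pstab_def
  proof (intro CollectI conjI ballI d'c)
    fix x assume x: "x \<in> b"
    with bX have xX: "x \<in> X" by blast
    have gx: "\<phi> \<gamma> x \<in> X" using group_action.element_image[OF ga g xX] by blast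
    have "\<phi> d' x = \<phi> (inv\<^bsub>G\<^esub> \<gamma>) (\<phi> \<delta> (\<phi> \<gamma> x))"
      unfolding d'_def using xX g dc
      by (simp add: group_action.composition_rule[OF ga])
    also have "\<phi> \<delta> (\<phi> \<gamma> x) = \<phi> \<gamma> x" using d x by (simp add: pstab_def)
    also have "\<phi> (inv\<^bsub>G\<^esub> \<gamma>) (\<phi> \<gamma> x) = x"
      using group_action.composition_rule[OF ga xX inv_closed[OF g] g] l_inv[OF g] phi_one[OF ga xX]
      by simp
    finally show "\<phi> d' x = x" .
  qed
  then have "veq (vact \<phi> d' t) t" using fx by blast
  then have "veq (vact \<phi> \<gamma> (vact \<phi> d' t)) (vact \<phi> \<gamma> t)" by (rule veq_vact)
  moreover have "vact \<phi> \<gamma> (vact \<phi> d' t) = vact \<phi> (\<gamma> \<otimes>\<^bsub>G\<^esub> d') t"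
    by (rule vact_comp) (use tX g d'c in \<open>auto simp: group_action.composition_rule[OF ga]\<close>)
  moreover have "vact \<phi> \<delta> (vact \<phi> \<gamma> t) = vact \<phi> (\<delta> \<otimes>\<^bsub>G\<^esub> \<gamma>) t"
    by (rule vact_comp) (use tX g dc in \<open>auto simp: group_action.composition_rule[OF ga]\<close>)
  moreover have "\<gamma> \<otimes>\<^bsub>G\<^esub> d' = \<delta> \<otimes>\<^bsub>G\<^esub> \<gamma>"
    unfolding d'_def using g dc by (simp add: m_assoc[symmetric])
  ultimately show ?thesis by simp
qed

lemma symmetric_iff: "symmetric G \<phi> I t \<longleftrightarrow> (\<exists>b\<in>I. \<forall>\<delta>\<in>pstab G \<phi> b. veq (vact \<phi> \<delta> t) t)"
  unfolding symmetric_def vstab_def pstab_def by blast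

lemma sym_small: "b \<in> I \<Longrightarrow> atoms t \<subseteq> b \<Longrightarrow> symmetric G \<phi> I t"
  unfolding symmetric_iff
  by (metis (no_types, lifting) pstab_fix subset_iff vact_fix veq_refl)

lemma dyn_sub: "dyn_ideal G X \<phi> I \<Longrightarrow> b \<in> I \<Longrightarrow> b \<subseteq> X"
  unfolding dyn_ideal_def by blast

lemma inW_small:
  assumes "dyn_ideal G X \<phi> I" "b \<in> I" "atoms t \<subseteq> b"
  shows "inW G X \<phi> I t"
  unfolding inW_def atoms_in_iff
  using assms dyn_sub[OF assms(1,2)] atoms_vsub sym_small by (metis order_trans)

lemma fix_Node:
  "isSet t \<Longrightarrow> (\<And>u. u \<in> children t \<Longrightarrow> veq (vact \<phi> \<delta> u) u) \<Longrightarrow> veq (vact \<phi> \<delta> t) t"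
  by (rule veq_byI) (auto simp: children_vact)


lemma children_map: "children (Node (\<lambda>i. map_option h (f i))) = h ` children (Node f)"
proof (rule Set.set_eqI)
  fix s
  have "s \<in> children (Node (\<lambda>i. map_option h (f i))) \<longleftrightarrow> (\<exists>i. map_option h (f i) = Some s)"
    unfolding children_Node by (simp add: image_iff eq_commute)
  also have "\<dots> \<longleftrightarrow> (\<exists>i u. f i = Some u \<and> s = h u)"
    by (auto simp: map_option_eq_Some)
  also have "\<dots> \<longleftrightarrow> s \<in> h ` children (Node f)"
    unfolding children_Node by (simp add: image_iff) (metis rangeE rangeI)
  finally show "s \<in> children (Node (\<lambda>i. map_option h (f i))) \<longleftrightarrow> s \<in> h ` children (Node f)" .
qed

lemma vsub_up:
  assumes "infinite (UNIV :: 'i set)" "vsub s (up a b :: ('x, 'i) vtree)"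
  shows "s = a \<or> s = b \<or> vsub s a \<or> vsub s b"
  using assms(2) unfolding vsub_iff[of s "up a b"] children_up[OF assms(1)] by blast

lemma vsub_kp:
  assumes "infinite (UNIV :: 'i set)" "vsub s (kp a b :: ('x, 'i) vtree)"
  shows "s = up a a \<or> s = up a b \<or> s = a \<or> s = b \<or> vsub s a \<or> vsub s b"
proof -
  from assms(2) obtain u where u: "u \<in> {up a a, up a b}" "s = u \<or> vsub s u"
    unfolding vsub_iff[of s "kp a b"] children_kp[OF assms(1)] by blast
  show ?thesis
  proof (cases "s = u")
    case True then show ?thesis using u by blast
  next
    case False
    then have "vsub s u" using u by blast
    then show ?thesis using u(1) vsub_up[OF assms(1)] by blast
  qed
qed

lemma atoms_up:
  assumes "infinite (UNIV :: 'i set)"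
  shows "atoms (up a b :: ('x, 'i) vtree) = atoms a \<union> atoms b"
proof -
  have "atoms (up a b :: ('x, 'i) vtree) = \<Union> (atoms ` children (up a b :: ('x, 'i) vtree))"
    unfolding up_def by (rule atoms_Node)
  then show ?thesis unfolding children_up[OF assms] by (simp only: image_insert image_empty Union_insert Union_empty Un_empty_right)
qed

lemma atoms_kp:
  assumes "infinite (UNIV :: 'i set)"
  shows "atoms (kp a b :: ('x, 'i) vtree) = atoms a \<union> atoms b"
  unfolding kp_def atoms_up[OF assms] by blast

lemma dyn_D1: "dyn_ideal G X \<phi> I \<Longrightarrow> group_action G X \<phi>"
  unfolding dyn_ideal_def by (elim conjE) assumption

lemma dyn_D2: "dyn_ideal G X \<phi> I \<Longrightarrow> I \<subseteq> Pow X"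
  unfolding dyn_ideal_def by (elim conjE) assumption

lemma dyn_D3: "dyn_ideal G X \<phi> I \<Longrightarrow> {} \<in> I"
  unfolding dyn_ideal_def by (elim conjE) assumption

lemma dyn_D4: "dyn_ideal G X \<phi> I \<Longrightarrow> \<forall>a\<in>I. \<forall>b. b \<subseteq> a \<longrightarrow> b \<in> I"
  unfolding dyn_ideal_def by (elim conjE) assumption

lemma dyn_D5: "dyn_ideal G X \<phi> I \<Longrightarrow> \<forall>a\<in>I. \<forall>b\<in>I. a \<union> b \<in> I"
  unfolding dyn_ideal_def by (elim conjE) assumption

lemma dyn_D6: "dyn_ideal G X \<phi> I \<Longrightarrow> \<forall>x\<in>X. {x} \<in> I"
  unfolding dyn_ideal_def by (elim conjE) assumption

lemma dyn_D7: "dyn_ideal G X \<phi> I \<Longrightarrow> \<forall>\<gamma>\<in>carrier G. \<forall>a\<in>I. \<phi> \<gamma> ` a \<in> I"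
  unfolding dyn_ideal_def by (elim conjE) assumption

lemma dyn_ga: "dyn_ideal G X \<phi> I \<Longrightarrow> group_action G X \<phi>"
  by (rule dyn_D1)

lemma dyn_union: "dyn_ideal G X \<phi> I \<Longrightarrow> a \<in> I \<Longrightarrow> b \<in> I \<Longrightarrow> a \<union> b \<in> I"
  using dyn_D5 by blast

lemma dyn_subset: "dyn_ideal G X \<phi> I \<Longrightarrow> a \<in> I \<Longrightarrow> b \<subseteq> a \<Longrightarrow> b \<in> I"
  using dyn_D4 by blast

lemma dyn_image: "dyn_ideal G X \<phi> I \<Longrightarrow> a \<in> I \<Longrightarrow> \<gamma> \<in> carrier G \<Longrightarrow> \<phi> \<gamma> ` a \<in> I"
  using dyn_D7 by blast

lemma dyn_empty: "dyn_ideal G X \<phi> I \<Longrightarrow> {} \<in> I"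
  using dyn_D3 by blast

lemma dyn_sub': "dyn_ideal G X \<phi> I \<Longrightarrow> b \<in> I \<Longrightarrow> b \<subseteq> X"
  using dyn_D2 by blast

lemma sym_vact:
  assumes dyn: "dyn_ideal G X \<phi> I" and g: "\<gamma> \<in> carrier G" and tX: "atoms t \<subseteq> X"
    and s: "symmetric G \<phi> I t"
  shows "symmetric G \<phi> I (vact \<phi> \<gamma> t)"
proof -
  have ga: "group_action G X \<phi>" using dyn by (rule dyn_ga)
  from s[unfolded symmetric_iff] obtain b where b: "b \<in> I" "\<forall>\<delta>\<in>pstab G \<phi> b. veq (vact \<phi> \<delta> t) t"
    by (elim bexE)
  have bX: "b \<subseteq> X" using dyn_sub'[OF dyn b(1)] .
  have "\<phi> \<gamma> ` b \<in> I" using dyn_image[OF dyn b(1) g] .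
  moreover have "\<forall>\<delta>\<in>pstab G \<phi> (\<phi> \<gamma> ` b). veq (vact \<phi> \<delta> (vact \<phi> \<gamma> t)) (vact \<phi> \<gamma> t)"
    using conj_fix[OF ga g tX bX b(2)] by (intro ballI)
  ultimately show ?thesis unfolding symmetric_iff by (rule bexI[rotated])
qed

lemma inW_vsub:
  assumes "inW G X \<phi> I F" "vsub s F"
  shows "symmetric G \<phi> I s" "atoms s \<subseteq> X"
proof -
  show "symmetric G \<phi> I s" using assms unfolding inW_def by (elim conjE) (erule allE, erule mp)
  have "atoms F \<subseteq> X" using assms(1) unfolding inW_def atoms_in_iff by (elim conjE)
  then show "atoms s \<subseteq> X" using atoms_vsub[OF assms(2)] by (rule order_trans[rotated])
qed

lemma sym_by: "S \<in> I \<Longrightarrow> (\<And>\<delta>. \<delta> \<in> pstab G \<phi> S \<Longrightarrow> veq (vact \<phi> \<delta> t) t) \<Longrightarrow> symmetric G \<phi> I t"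
  unfolding symmetric_iff by (intro bexI[of _ S] ballI)

lemma image_X: assumes "group_action G X \<phi>" "\<gamma> \<in> carrier G" "A \<subseteq> X" shows "\<phi> \<gamma> ` A \<subseteq> X"
proof
  fix y assume "y \<in> \<phi> \<gamma> ` A"
  then obtain x where "x \<in> A" "y = \<phi> \<gamma> x" by (elim imageE)
  then show "y \<in> X" using group_action.element_image[OF assms(1,2)] assms(3) by (metis subsetD)
qed


locale p1 =
  fixes G :: "('g, 'm) monoid_scheme" and X :: "'x set" and \<phi> :: "'g \<Rightarrow> 'x \<Rightarrow> 'x" and I :: "'x set set"
    and F g w :: "('x, 'i) vtree" and \<nu> :: "nat \<Rightarrow> 'i" and bg :: "'x set" and f :: "'i \<Rightarrow> ('x, 'i) vtree option"
  assumes dyn: "dyn_ideal G X \<phi> I" and inf: "infinite (UNIV :: 'i set)" and nu: "inj \<nu>"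
    and sc: "sigma_complete G \<phi> I"
    and FW: "inW G X \<phi> I F" and Ff: "F = Node f"
    and ne: "\<forall>A. vmem A F \<longrightarrow> isSet A \<and> (\<exists>y. vmem y A)"
    and gW: "inW G X \<phi> I g" and om: "is_omega w" and gfun: "is_fun g F"
    and gsnd: "\<forall>p a n. vmem p g \<and> is_kpair p a n \<longrightarrow> vmem n w"
    and ginj: "\<forall>p p' a a' n. vmem p g \<and> vmem p' g \<and> is_kpair p a n \<and> is_kpair p' a' n \<longrightarrow> veq a a'"
    and bgI: "bg \<in> I" and bgfix: "\<forall>\<delta>\<in>pstab G \<phi> bg. veq (vact \<phi> \<delta> g) g"
begin

lemma ga: "group_action G X \<phi>" using dyn by (rule dyn_ga)

definition P where "P A k \<longleftrightarrow> (\<exists>p m. vmem p g \<and> is_kpair p A m \<and> is_vnat k m)"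
definition val where "val A = (SOME k. P A k)"

lemma gfun2: "\<forall>a. vmem a F \<longrightarrow> (\<exists>p b. vmem p g \<and> is_kpair p a b)"
  using gfun unfolding is_fun_def by (elim conjE)

lemma P_ex: assumes A: "A \<in> children F" shows "\<exists>k. P A k"
proof -
  have "vmem A F" by (rule vmem_child[OF A])
  then obtain p b where pb: "vmem p g" "is_kpair p A b" using gfun2 by blast
  then have "vmem b w" using gsnd by blast
  then obtain k where "is_vnat k b" using om unfolding is_omega_def by blast
  then have "P A k" unfolding P_def using pb by blast
  then show ?thesis ..
qed

lemma P_val: "A \<in> children F \<Longrightarrow> P A (val A)"
  unfolding val_def by (rule someI_ex[OF P_ex])

lemma P_cong: assumes "veq A A'" "P A k" shows "P A' k"
proof -
  obtain p m where pm: "vmem p g" "is_kpair p A m" "is_vnat k m" using assms(2) unfolding P_def by blast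
  have "is_kpair p A' m" using is_kpair_cong[OF inf pm(2) veq_refl assms(1) veq_refl] .
  then show ?thesis unfolding P_def using pm by blast
qed

lemma val_cong: assumes "veq A A'" shows "val A = val A'"
proof -
  have "P A = P A'"
  proof (intro ext iffI)
    fix k
    show "P A k \<Longrightarrow> P A' k" using P_cong[OF assms] .
    show "P A' k \<Longrightarrow> P A k" using P_cong[OF veq_sym[OF assms]] .
  qed
  then show ?thesis unfolding val_def by simp
qed

lemma P_eq: assumes "P A k" "P B k" shows "veq A B"
proof -
  obtain p m where pm: "vmem p g" "is_kpair p A m" "is_vnat k m" using assms(1) unfolding P_def by blast
  obtain p' m' where pm': "vmem p' g" "is_kpair p' B m'" "is_vnat k m'" using assms(2) unfolding P_def by blast
  have "veq m' m" using is_vnat_iff[OF nu] pm(3) pm'(3) veq_trans veq_sym by metis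
  then have "is_kpair p' B m" using is_kpair_cong[OF inf pm'(2) veq_refl veq_refl] by blast
  then show ?thesis using ginj pm(1,2) pm'(1) by blast
qed

lemma stab: assumes d: "\<delta> \<in> pstab G \<phi> bg" and A: "A \<in> children F" shows "veq (vact \<phi> \<delta> A) A"
proof -
  obtain p m where pm: "vmem p g" "is_kpair p A m" "is_vnat (val A) m"
    using P_val[OF A] unfolding P_def by blast
  have "vmem (vact \<phi> \<delta> p) (vact \<phi> \<delta> g)" by (rule vmem_vact[OF pm(1)])
  then have vp: "vmem (vact \<phi> \<delta> p) g" using bgfix d vmem_veq2 by blast
  have "is_kpair (vact \<phi> \<delta> p) (vact \<phi> \<delta> A) (vact \<phi> \<delta> m)" by (rule is_kpair_vact[OF inf pm(2)])
  moreover have "veq (vact \<phi> \<delta> m) m" by (rule is_vnat_vact[OF nu pm(3)])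
  ultimately have "is_kpair (vact \<phi> \<delta> p) (vact \<phi> \<delta> A) m"
    using is_kpair_cong[OF inf _ veq_refl veq_refl] by blast
  then have "P (vact \<phi> \<delta> A) (val A)" unfolding P_def using vp pm(3) by blast
  then show ?thesis using P_eq P_val[OF A] by blast
qed

definition has where "has n \<longleftrightarrow> (\<exists>A\<in>children F. val A = n)"
definition An where "An n = (SOME A. A \<in> children F \<and> val A = n)"
definition yn where "yn n = (SOME y. y \<in> children (An n))"
definition bn where "bn n = (if has n then (SOME b. b \<in> I \<and> (\<forall>\<delta>\<in>pstab G \<phi> b. veq (vact \<phi> \<delta> (yn n)) (yn n))) else {})"

lemma An: "has n \<Longrightarrow> An n \<in> children F \<and> val (An n) = n"
  unfolding An_def has_def by (rule someI_ex) blast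

lemma yn: assumes "has n" shows "yn n \<in> children (An n)"
proof -
  have "vmem (An n) F" using An[OF assms] vmem_child by blast
  then obtain y where "vmem y (An n)" using ne by blast
  then have "\<exists>y. y \<in> children (An n)" unfolding vmem_def by blast
  then show ?thesis unfolding yn_def by (rule someI_ex)
qed

lemma yn_vsub: "has n \<Longrightarrow> vsub (yn n) F"
  using vsub_trans[OF vsub_child[OF yn] vsub_child] An by blast

lemma yn_sym: "has n \<Longrightarrow> symmetric G \<phi> I (yn n)"
  using inW_vsub(1)[OF FW yn_vsub] .

lemma yn_atoms: "has n \<Longrightarrow> atoms (yn n) \<subseteq> X"
  using inW_vsub(2)[OF FW yn_vsub] .

lemma bn: "bn n \<in> I \<and> (has n \<longrightarrow> (\<forall>\<delta>\<in>pstab G \<phi> (bn n). veq (vact \<phi> \<delta> (yn n)) (yn n)))"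
proof (cases "has n")
  case True
  have "\<exists>b. b \<in> I \<and> (\<forall>\<delta>\<in>pstab G \<phi> b. veq (vact \<phi> \<delta> (yn n)) (yn n))"
    using yn_sym[OF True] unfolding symmetric_iff by blast
  then have "bn n \<in> I \<and> (\<forall>\<delta>\<in>pstab G \<phi> (bn n). veq (vact \<phi> \<delta> (yn n)) (yn n))"
    unfolding bn_def using True by (simp only: if_True) (rule someI_ex)
  then show ?thesis by blast
next
  case False
  then show ?thesis unfolding bn_def using dyn_empty[OF dyn] by simp
qed

lemma bnX: "bn n \<subseteq> X" using dyn_sub'[OF dyn] bn by blast

definition gs where "gs = (SOME \<gamma>. (\<forall>n. \<gamma> n \<in> pstab G \<phi> bg) \<and> (\<Union>n. \<phi> (\<gamma> n) ` bn n) \<in> I)"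

lemma gs: "(\<forall>n. gs n \<in> pstab G \<phi> bg) \<and> (\<Union>n. \<phi> (gs n) ` bn n) \<in> I"
proof -
  have "\<forall>b :: nat \<Rightarrow> 'x set. (\<forall>n. b n \<in> I) \<longrightarrow>
        (\<exists>\<gamma> :: nat \<Rightarrow> 'g. (\<forall>n. \<gamma> n \<in> pstab G \<phi> bg) \<and> (\<Union>n. \<phi> (\<gamma> n) ` b n) \<in> I)"
    using sc bgI unfolding sigma_complete_def by blast
  then have "\<exists>\<gamma> :: nat \<Rightarrow> 'g. (\<forall>n. \<gamma> n \<in> pstab G \<phi> bg) \<and> (\<Union>n. \<phi> (\<gamma> n) ` bn n) \<in> I"
    using bn by blast
  then show ?thesis unfolding gs_def by (rule someI_ex)
qed

lemma gs_car: "gs n \<in> carrier G" by (rule pstab_carrier[OF gs[THEN conjunct1, rule_format]])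

definition y' where "y' n = vact \<phi> (gs n) (yn n)"
definition c where "c = Node (\<lambda>i. map_option (\<lambda>A. kp A (y' (val A))) (f i))"

lemma children_c: "children c = (\<lambda>A. kp A (y' (val A))) ` children F"
  unfolding c_def children_map Ff[symmetric] ..

lemma has_val: "A \<in> children F \<Longrightarrow> has (val A)"
  unfolding has_def by blast

lemma mem: assumes A: "A \<in> children F" shows "vmem (y' (val A)) A"
proof -
  define n where "n = val A"
  have h: "has n" unfolding n_def by (rule has_val[OF A])
  have e: "veq (An n) A" using P_eq P_val An[OF h] P_val[OF A] unfolding n_def by metis
  have "vmem (y' n) (vact \<phi> (gs n) (An n))" unfolding y'_def
    by (rule vmem_vact[OF vmem_child[OF yn[OF h]]])
  moreover have "veq (vact \<phi> (gs n) (An n)) (An n)" using stab gs An[OF h] by blast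
  ultimately have "vmem (y' n) (An n)" using vmem_veq2 by blast
  then show ?thesis using vmem_veq2[OF e] unfolding n_def by blast
qed

lemma cmem: "vmem p c \<Longrightarrow> \<exists>A\<in>children F. veq p (kp A (y' (val A)))"
  unfolding vmem_def children_c by blast

lemma cfun: "is_fun c F"
  unfolding is_fun_def
proof (intro conjI allI impI)
  show "isSet c" unfolding c_def isSet_def by blast
next
  fix p assume "vmem p c"
  then obtain A where A: "A \<in> children F" "veq p (kp A (y' (val A)))" using cmem by blast
  have "is_kpair p A (y' (val A))" using A(2) is_kpair_iff[OF inf] by blast
  moreover have "vmem A F" using vmem_child[OF A(1)] .
  ultimately show "\<exists>a b. is_kpair p a b \<and> vmem a F" by blast
next
  fix a assume "vmem a F"
  then obtain A where A: "A \<in> children F" "veq a A" unfolding vmem_def by blast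
  have "vmem (kp A (y' (val A))) c" unfolding vmem_def children_c using A(1) by blast
  moreover have "is_kpair (kp A (y' (val A))) a (y' (val A))"
    using is_kpair_cong[OF inf is_kpair_kp[OF inf] veq_refl veq_sym[OF A(2)] veq_refl] .
  ultimately show "\<exists>p b. vmem p c \<and> is_kpair p a b" by blast
next
  fix p p' a b b' assume h: "vmem p c \<and> vmem p' c \<and> is_kpair p a b \<and> is_kpair p' a b'"
  obtain A where A: "A \<in> children F" "veq p (kp A (y' (val A)))" using h cmem by blast
  obtain A' where A': "A' \<in> children F" "veq p' (kp A' (y' (val A')))" using h cmem by blast
  have k1: "is_kpair p A (y' (val A))" using A(2) is_kpair_iff[OF inf] by blast
  have k2: "is_kpair p' A' (y' (val A'))" using A'(2) is_kpair_iff[OF inf] by blast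
  have "veq A a \<and> veq (y' (val A)) b" using is_kpair_inj[OF inf k1] h by blast
  moreover have "veq A' a \<and> veq (y' (val A')) b'" using is_kpair_inj[OF inf k2] h by blast
  ultimately have "veq A A'" "veq b (y' (val A))" "veq (y' (val A')) b'"
    using veq_trans veq_sym by metis+
  moreover have "val A = val A'" using val_cong[OF \<open>veq A A'\<close>] .
  ultimately show "veq b b'" using veq_trans by metis
qed

lemma choice: "vmem p c \<and> is_kpair p A y \<longrightarrow> vmem y A"
proof
  assume h: "vmem p c \<and> is_kpair p A y"
  obtain A0 where A0: "A0 \<in> children F" "veq p (kp A0 (y' (val A0)))" using h cmem by blast
  have "is_kpair p A0 (y' (val A0))" using A0(2) is_kpair_iff[OF inf] by blast
  then have "veq A0 A \<and> veq (y' (val A0)) y" using is_kpair_inj[OF inf] h by blast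
  moreover have "vmem (y' (val A0)) A0" by (rule mem[OF A0(1)])
  ultimately show "vmem y A" using vmem_veq1 vmem_veq2 by blast
qed

definition S where "S = bg \<union> (\<Union>n. \<phi> (gs n) ` bn n)"

lemma SI: "S \<in> I" unfolding S_def by (rule dyn_union[OF dyn bgI gs[THEN conjunct2]])

lemma fixA: assumes "\<delta> \<in> pstab G \<phi> S" "A \<in> children F" shows "veq (vact \<phi> \<delta> A) A"
proof -
  have "pstab G \<phi> S \<subseteq> pstab G \<phi> bg" unfolding S_def by (rule pstab_anti) (rule Un_upper1)
  then show ?thesis by (rule stab[OF subsetD[OF _ assms(1)] assms(2)])
qed

lemma fixy: assumes d: "\<delta> \<in> pstab G \<phi> S" and h: "has n" shows "veq (vact \<phi> \<delta> (y' n)) (y' n)"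
proof -
  have "\<phi> (gs n) ` bn n \<subseteq> S" unfolding S_def by blast
  then have "pstab G \<phi> S \<subseteq> pstab G \<phi> (\<phi> (gs n) ` bn n)" by (rule pstab_anti)
  then have d': "\<delta> \<in> pstab G \<phi> (\<phi> (gs n) ` bn n)" using d by (rule subsetD)
  have fx: "\<forall>\<delta>\<in>pstab G \<phi> (bn n). veq (vact \<phi> \<delta> (yn n)) (yn n)"
    using bn[THEN conjunct2] h by (rule mp)
  show ?thesis unfolding y'_def
    by (rule conj_fix[OF ga gs_car yn_atoms[OF h] bnX fx d'])
qed

lemma y'_sym: "has n \<Longrightarrow> symmetric G \<phi> I (y' n)"
  unfolding y'_def using sym_vact[OF dyn gs_car yn_atoms yn_sym] .

lemma y'_atoms: "has n \<Longrightarrow> atoms (y' n) \<subseteq> X"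
  unfolding y'_def atoms_vact using image_X[OF ga gs_car yn_atoms] .

lemma A_atoms: "A \<in> children F \<Longrightarrow> atoms A \<subseteq> X"
  using inW_vsub(2)[OF FW vsub_child] .

lemma A_sym: "A \<in> children F \<Longrightarrow> symmetric G \<phi> I A"
  using inW_vsub(1)[OF FW vsub_child] .

lemma cW: "inW G X \<phi> I c"
  unfolding inW_def atoms_in_iff
proof (intro conjI allI impI)
  have ua: "\<And>u. u \<in> children c \<Longrightarrow> atoms u \<subseteq> X"
  proof -
    fix u assume "u \<in> children c"
    then obtain A where A: "A \<in> children F" "u = kp A (y' (val A))" unfolding children_c by blast
    show "atoms u \<subseteq> X" unfolding A(2) atoms_kp[OF inf]
      by (rule Un_least[OF A_atoms[OF A(1)] y'_atoms[OF has_val[OF A(1)]]])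
  qed
  have "atoms c = \<Union> (atoms ` children c)" unfolding c_def by (rule atoms_Node)
  also have "\<dots> \<subseteq> X" by (rule UN_least) (rule ua)
  finally show "atoms c \<subseteq> X" .
next
  have kfix: "\<And>\<delta> A. \<delta> \<in> pstab G \<phi> S \<Longrightarrow> A \<in> children F \<Longrightarrow>
     veq (vact \<phi> \<delta> (up A A)) (up A A) \<and> veq (vact \<phi> \<delta> (up A (y' (val A)))) (up A (y' (val A)))
     \<and> veq (vact \<phi> \<delta> (kp A (y' (val A)))) (kp A (y' (val A)))"
    unfolding vact_kp vact_up using fixA fixy has_val up_cong[OF inf] kp_cong[OF inf] by metis
  show "symmetric G \<phi> I c"
  proof (rule sym_by[OF SI])
    fix \<delta> assume d: "\<delta> \<in> pstab G \<phi> S"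
    show "veq (vact \<phi> \<delta> c) c"
      by (rule fix_Node) (auto simp: c_def isSet_def children_c[unfolded c_def] intro: kfix[OF d, THEN conjunct2, THEN conjunct2])
  qed
  fix s assume "vsub s c"
  then obtain u where u: "u \<in> children c" "s = u \<or> vsub s u" using vsub_iff by blast
  then obtain A where A: "A \<in> children F" "u = kp A (y' (val A))" unfolding children_c by blast
  have hv: "has (val A)" by (rule has_val[OF A(1)])
  have sA: "\<And>s. vsub s A \<Longrightarrow> symmetric G \<phi> I s" using inW_vsub(1)[OF FW] vsub_trans vsub_child[OF A(1)] by blast
  have sy: "\<And>s. vsub s (y' (val A)) \<Longrightarrow> symmetric G \<phi> I s"
  proof -
    fix s assume "vsub s (y' (val A))"
    from vsub_vact[OF this[unfolded y'_def]]
    obtain s0 where s0: "vsub s0 (yn (val A))" "s = vact \<phi> (gs (val A)) s0"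
      by blast
    have v0: "vsub s0 F" using vsub_trans[OF s0(1) yn_vsub[OF hv]] .
    show "symmetric G \<phi> I s" unfolding s0(2)
      using sym_vact[OF dyn gs_car inW_vsub(2)[OF FW v0] inW_vsub(1)[OF FW v0]] .
  qed
  have "s = u \<or> s = up A A \<or> s = up A (y' (val A)) \<or> s = A \<or> s = y' (val A) \<or> vsub s A \<or> vsub s (y' (val A))"
    using u(2) vsub_kp[OF inf] unfolding A(2) by blast
  then show "symmetric G \<phi> I s"
  proof (elim disjE)
    assume "s = u" then show ?thesis using sym_by[OF SI] kfix A by metis
  next
    assume "s = up A A" then show ?thesis using sym_by[OF SI] kfix A by metis
  next
    assume "s = up A (y' (val A))" then show ?thesis using sym_by[OF SI] kfix A by metis
  next
    assume "s = A" then show ?thesis using A_sym A by blast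
  next
    assume "s = y' (val A)" then show ?thesis using y'_sym hv by blast
  qed (use sA sy in blast)+
qed

lemma result: "\<exists>c. inW G X \<phi> I c \<and> is_fun c F \<and> (\<forall>p A y. vmem p c \<and> is_kpair p A y \<longrightarrow> vmem y A)"
  using cW cfun choice by blast

end

lemma part1:
  fixes G :: "('g, 'm) monoid_scheme" and X :: "'x set" and \<phi> :: "'g \<Rightarrow> 'x \<Rightarrow> 'x"
    and I :: "'x set set"
  assumes dyn: "dyn_ideal G X \<phi> I" and inf: "infinite (UNIV :: 'i set)"
    and sc: "sigma_complete G \<phi> I"
  shows "countable_choice_W TYPE('i) G X \<phi> I"
  unfolding countable_choice_W_def
proof (intro allI impI)
  fix F :: "('x, 'i) vtree"
  assume H: "inW G X \<phi> I F \<and> isSet F \<and> countable_in_W G X \<phi> I F \<and> (\<forall>A. vmem A F \<longrightarrow> isSet A \<and> (\<exists>y. vmem y A))"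
  obtain \<nu> :: "nat \<Rightarrow> 'i" where nu: "inj \<nu>" using infinite_countable_subset[OF inf] by blast
  obtain f where Ff: "F = Node f" using H unfolding isSet_def by blast
  obtain g w where gw: "inW G X \<phi> I g" "is_omega w" "is_fun g F"
     "\<forall>p a n. vmem p g \<and> is_kpair p a n \<longrightarrow> vmem n w"
     "\<forall>p p' a a' n. vmem p g \<and> vmem p' g \<and> is_kpair p a n \<and> is_kpair p' a' n \<longrightarrow> veq a a'"
    using H unfolding countable_in_W_def by blast
  obtain bg where bg: "bg \<in> I" "\<forall>\<delta>\<in>pstab G \<phi> bg. veq (vact \<phi> \<delta> g) g"
    using gw(1) unfolding inW_def symmetric_iff by blast
  interpret p1 G X \<phi> I F g w \<nu> bg f
    by (unfold_locales) (use dyn inf nu sc H Ff gw bg in auto)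
  show "\<exists>c. inW G X \<phi> I c \<and> is_fun c F \<and> (\<forall>p A y. vmem p c \<and> is_kpair p A y \<longrightarrow> vmem y A)"
    by (rule result)
qed


definition graph :: "('x \<Rightarrow> 'x) \<Rightarrow> ('x \<times> 'x) set" where
  "graph f = range (\<lambda>x. (x, f x))"

lemma inj_graph: "inj graph"
proof (rule injI)
  fix f g :: "'x \<Rightarrow> 'x" assume e: "graph f = graph g"
  show "f = g"
  proof
    fix x
    have "(x, f x) \<in> graph g" using e unfolding graph_def by blast
    then show "f x = g x" unfolding graph_def by blast
  qed
qed

lemma fun_inj_i:
  assumes inf: "infinite (UNIV :: 'i set)" and e: "inj (e :: 'x set set \<Rightarrow> 'i)"
  shows "\<exists>h :: ('x \<Rightarrow> 'x) \<Rightarrow> 'i. inj h"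
proof (cases "finite (UNIV :: 'x set)")
  case True
  have "finite (UNIV :: ('x \<times> 'x) set)"
    using finite_cartesian_product[OF True True] by simp
  then have "finite (Pow (UNIV :: ('x \<times> 'x) set))" by (simp only: finite_Pow_iff)
  then have fin: "finite (UNIV :: ('x \<times> 'x) set set)" by (simp only: Pow_UNIV)
  obtain q :: "('x \<times> 'x) set \<Rightarrow> nat" where q: "inj q"
    using finite_imp_inj_to_nat_seg[OF fin] by blast
  obtain \<nu> :: "nat \<Rightarrow> 'i" where nu: "inj \<nu>" using infinite_countable_subset[OF inf] by blast
  have "inj (\<nu> \<circ> q \<circ> graph)" by (rule inj_compose[OF inj_compose[OF nu q] inj_graph])
  then show ?thesis by blast
next
  case False
  obtain p :: "'x \<times> 'x \<Rightarrow> 'x" where p: "bij_betw p (UNIV \<times> UNIV) UNIV"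
    using card_of_ordIso[THEN iffD2, OF card_of_Times_same_infinite[OF False]] by blast
  then have ip: "inj p" unfolding bij_betw_def by simp
  define h where "h f = e {p ` graph f}" for f
  have "inj h"
  proof (rule injI)
    fix f g assume "h f = h g"
    then have "{p ` graph f} = {p ` graph g}" unfolding h_def using e by (simp add: inj_eq)
    then have "p ` graph f = p ` graph g" by simp
    then have "graph f = graph g" using ip by (simp add: inj_image_eq_iff)
    then show "f = g" by (rule injD[OF inj_graph])
  qed
  then show ?thesis by blast
qed


lemma inv_pstab:
  assumes ga: "group_action G X \<phi>" and aX: "a \<subseteq> X" and d: "\<delta> \<in> pstab G \<phi> a"
  shows "inv\<^bsub>G\<^esub> \<delta> \<in> pstab G \<phi> a"
proof -
  interpret group G using ga_group[OF ga] .
  have dc: "\<delta> \<in> carrier G" by (rule pstab_carrier[OF d])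
  show ?thesis unfolding pstab_def
  proof (intro CollectI conjI ballI)
    show "inv\<^bsub>G\<^esub> \<delta> \<in> carrier G" using dc by simp
    fix x assume x: "x \<in> a"
    then have xX: "x \<in> X" using aX by blast
    have "\<phi> (inv\<^bsub>G\<^esub> \<delta>) x = \<phi> (inv\<^bsub>G\<^esub> \<delta>) (\<phi> \<delta> x)" using pstab_fix[OF d x] by simp
    also have "\<dots> = x"
      using group_action.composition_rule[OF ga xX inv_closed[OF dc] dc] l_inv[OF dc] phi_one[OF ga xX]
      by simp
    finally show "\<phi> (inv\<^bsub>G\<^esub> \<delta>) x = x" .
  qed
qed

lemma lmult_pstab:
  assumes ga: "group_action G X \<phi>" and aX: "a \<subseteq> X" and d: "\<delta> \<in> pstab G \<phi> a"
  shows "(\<lambda>\<gamma>. \<delta> \<otimes>\<^bsub>G\<^esub> \<gamma>) ` pstab G \<phi> a = pstab G \<phi> a"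
proof
  show "(\<lambda>\<gamma>. \<delta> \<otimes>\<^bsub>G\<^esub> \<gamma>) ` pstab G \<phi> a \<subseteq> pstab G \<phi> a"
    using mult_pstab[OF ga aX d] by blast
next
  interpret group G using ga_group[OF ga] .
  have dc: "\<delta> \<in> carrier G" by (rule pstab_carrier[OF d])
  show "pstab G \<phi> a \<subseteq> (\<lambda>\<gamma>. \<delta> \<otimes>\<^bsub>G\<^esub> \<gamma>) ` pstab G \<phi> a"
  proof
    fix \<gamma> assume g: "\<gamma> \<in> pstab G \<phi> a"
    have gc: "\<gamma> \<in> carrier G" by (rule pstab_carrier[OF g])
    have "inv\<^bsub>G\<^esub> \<delta> \<otimes>\<^bsub>G\<^esub> \<gamma> \<in> pstab G \<phi> a"
      by (rule mult_pstab[OF ga aX inv_pstab[OF ga aX d] g])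
    moreover have "\<gamma> = \<delta> \<otimes>\<^bsub>G\<^esub> (inv\<^bsub>G\<^esub> \<delta> \<otimes>\<^bsub>G\<^esub> \<gamma>)"
      using dc gc by (simp add: m_assoc[symmetric])
    ultimately show "\<gamma> \<in> (\<lambda>\<gamma>. \<delta> \<otimes>\<^bsub>G\<^esub> \<gamma>) ` pstab G \<phi> a" by (metis (no_types) image_eqI)
  qed
qed

lemma atoms_img: "atoms (img \<iota> S t) = \<Union> (atoms ` children (img \<iota> S t))"
  unfolding img_def by (rule atoms_Node)

locale p2 =
  fixes G :: "('g, 'm) monoid_scheme" and X :: "'x set" and \<phi> :: "'g \<Rightarrow> 'x \<Rightarrow> 'x" and I :: "'x set set"
    and a :: "'x set" and b :: "nat \<Rightarrow> 'x set" and \<nu> :: "nat \<Rightarrow> 'i" and \<iota> :: "'x \<Rightarrow> 'i"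
    and h :: "('x \<Rightarrow> 'x) \<Rightarrow> 'i" and R :: "('x \<times> 'x) set"
  assumes dyn: "dyn_ideal G X \<phi> I" and inf: "infinite (UNIV :: 'i set)" and nu: "inj \<nu>"
    and io: "inj \<iota>" and hi: "inj h" and wfR: "wf R" and tot: "\<forall>x y. x \<noteq> y \<longrightarrow> (x, y) \<in> R \<or> (y, x) \<in> R"
    and aI: "a \<in> I" and bI: "\<forall>n. b n \<in> I" and dc: "definably_closed G X \<phi> I"
    and cc: "countable_choice_W TYPE('i) G X \<phi> I"
begin

lemma ga: "group_action G X \<phi>" using dyn by (rule dyn_ga)
lemma aX: "a \<subseteq> X" using dyn_sub'[OF dyn aI] .
lemma bX: "b n \<subseteq> X" using dyn_sub'[OF dyn] bI by blast

definition ord :: "'x \<Rightarrow> ('x, 'i) vtree" where "ord x = ordw R \<iota> x"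

lemma atoms_ord: "atoms (ord x) = {}" unfolding ord_def by (rule atoms_ordw[OF wfR io])
lemma vact_ord: "vact \<psi> \<delta> (ord x) = ord x" unfolding ord_def by (rule vact_ordw[OF wfR io])

lemma ord_inj: assumes "veq (ord x) (ord y)" shows "x = y"
proof (rule ccontr)
  assume "x \<noteq> y"
  then have "(x, y) \<in> R \<or> (y, x) \<in> R" using tot by blast
  then show False
  proof
    assume "(x, y) \<in> R"
    then have "\<not> veq (ordw R \<iota> y) (ordw R \<iota> x :: ('x, 'i) vtree)" by (rule ordw_lt[OF wfR io])
    then show False using veq_sym[OF assms] unfolding ord_def by blast
  next
    assume "(y, x) \<in> R"
    then have "\<not> veq (ordw R \<iota> x) (ordw R \<iota> y :: ('x, 'i) vtree)" by (rule ordw_lt[OF wfR io])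
    then show False using assms unfolding ord_def by blast
  qed
qed

definition e0 :: "nat \<Rightarrow> ('x, 'i) vtree" where "e0 n = img \<iota> (b n) (\<lambda>x. kp (ord x) (Atom x))"

lemma vact_e0: "vact \<psi> \<delta> (e0 n) = img \<iota> (b n) (\<lambda>x. kp (ord x) (Atom (\<psi> \<delta> x)))"
  unfolding e0_def vact_img vact_kp vact_ord by simp

lemma children_vact_e0: "children (vact \<psi> \<delta> (e0 n)) = (\<lambda>x. kp (ord x) (Atom (\<psi> \<delta> x))) ` b n"
  unfolding vact_e0 by (rule children_img[OF inj_on_subset[OF io subset_UNIV]])

lemma atoms_e0: "atoms (e0 n) = b n"
proof -
  have "atoms (e0 n) = \<Union> (atoms ` children (e0 n))" unfolding e0_def by (rule atoms_img)
  also have "children (e0 n) = (\<lambda>x. kp (ord x) (Atom x)) ` b n"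
    unfolding e0_def by (rule children_img[OF inj_on_subset[OF io subset_UNIV]])
  finally show ?thesis by (simp add: atoms_kp[OF inf] atoms_ord)
qed

lemma atoms_vact_e0: "atoms (vact \<psi> \<delta> (e0 n)) = \<psi> \<delta> ` b n"
  unfolding atoms_vact atoms_e0 ..

definition Af :: "nat \<Rightarrow> ('x, 'i) vtree" where
  "Af n = img h (\<phi> ` pstab G \<phi> a) (\<lambda>f. vact (\<lambda>f. f) f (e0 n))"

lemma children_Af: "children (Af n) = (\<lambda>\<gamma>. vact \<phi> \<gamma> (e0 n)) ` pstab G \<phi> a"
proof -
  have "children (Af n) = (\<lambda>f. vact (\<lambda>f. f) f (e0 n)) ` \<phi> ` pstab G \<phi> a"
    unfolding Af_def by (rule children_img[OF inj_on_subset[OF hi subset_UNIV]])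
  also have "\<dots> = (\<lambda>\<gamma>. vact \<phi> \<gamma> (e0 n)) ` pstab G \<phi> a"
    unfolding image_image by (intro image_cong refl vact_cong)
  finally show ?thesis .
qed

lemma isSet_Af: "isSet (Af n)" unfolding Af_def by simp

lemma vact_vact_e0: "\<delta> \<in> carrier G \<Longrightarrow> \<gamma> \<in> carrier G \<Longrightarrow>
    vact \<phi> \<delta> (vact \<phi> \<gamma> (e0 n)) = vact \<phi> (\<delta> \<otimes>\<^bsub>G\<^esub> \<gamma>) (e0 n)"
proof (rule vact_comp)
  fix x assume "\<delta> \<in> carrier G" "\<gamma> \<in> carrier G" "x \<in> atoms (e0 n)"
  then show "\<phi> \<delta> (\<phi> \<gamma> x) = \<phi> (\<delta> \<otimes>\<^bsub>G\<^esub> \<gamma>) x"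
    using group_action.composition_rule[OF ga, of x \<delta> \<gamma>] bX[of n] unfolding atoms_e0 by (metis subsetD)
qed

lemma Af_fix: assumes d: "\<delta> \<in> pstab G \<phi> a" shows "veq (vact \<phi> \<delta> (Af n)) (Af n)"
proof -
  have dc: "\<delta> \<in> carrier G" by (rule pstab_carrier[OF d])
  have "children (vact \<phi> \<delta> (Af n)) = (\<lambda>\<gamma>. vact \<phi> \<delta> (vact \<phi> \<gamma> (e0 n))) ` pstab G \<phi> a"
    unfolding children_vact children_Af image_image ..
  also have "\<dots> = (\<lambda>\<gamma>. vact \<phi> \<gamma> (e0 n)) ` ((\<lambda>\<gamma>. \<delta> \<otimes>\<^bsub>G\<^esub> \<gamma>) ` pstab G \<phi> a)"
    unfolding image_image
  proof (rule image_cong[OF refl])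
    fix \<gamma> assume "\<gamma> \<in> pstab G \<phi> a"
    then show "vact \<phi> \<delta> (vact \<phi> \<gamma> (e0 n)) = vact \<phi> (\<delta> \<otimes>\<^bsub>G\<^esub> \<gamma>) (e0 n)"
      by (rule vact_vact_e0[OF dc pstab_carrier])
  qed
  also have "\<dots> = children (Af n)" unfolding lmult_pstab[OF ga aX d] children_Af ..
  finally have e: "children (vact \<phi> \<delta> (Af n)) = children (Af n)" .
  show ?thesis by (rule veq_byI) (use e isSet_Af in auto)
qed

lemma Af_atoms: "atoms (Af n) \<subseteq> X"
proof -
  have "atoms (Af n) = \<Union> (atoms ` children (Af n))" unfolding Af_def by (rule atoms_img)
  also have "\<dots> \<subseteq> X" unfolding children_Af image_image
  proof (rule UN_least)
    fix \<gamma> assume g: "\<gamma> \<in> pstab G \<phi> a"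
    show "atoms (vact \<phi> \<gamma> (e0 n)) \<subseteq> X" unfolding atoms_vact_e0
      by (rule image_X[OF ga pstab_carrier[OF g] bX])
  qed
  finally show ?thesis .
qed

lemma Af_sub_sym: assumes "vsub s (Af n)" shows "symmetric G \<phi> I s"
proof -
  obtain u where u: "u \<in> children (Af n)" "s = u \<or> vsub s u" using assms vsub_iff by blast
  then obtain \<gamma> where g: "\<gamma> \<in> pstab G \<phi> a" "u = vact \<phi> \<gamma> (e0 n)" unfolding children_Af by blast
  have "atoms u = \<phi> \<gamma> ` b n" unfolding g(2) atoms_vact_e0 ..
  moreover have "\<phi> \<gamma> ` b n \<in> I" using dyn_image[OF dyn bI[rule_format] pstab_carrier[OF g(1)]] .
  moreover have "atoms s \<subseteq> atoms u" using u(2) atoms_vsub by blast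
  ultimately show ?thesis using sym_small by (metis)
qed

lemma Af_sym: "symmetric G \<phi> I (Af n)"
  using sym_by[OF aI Af_fix] .

definition Fam :: "('x, 'i) vtree" where "Fam = img \<nu> UNIV Af"

lemma children_Fam: "children Fam = range Af"
  unfolding Fam_def by (rule children_img[OF nu])

lemma Fam_atoms: "atoms Fam \<subseteq> X"
proof -
  have "atoms Fam = \<Union> (atoms ` children Fam)" unfolding Fam_def by (rule atoms_img)
  also have "\<dots> \<subseteq> X" unfolding children_Fam image_image by (rule UN_least) (rule Af_atoms)
  finally show "atoms Fam \<subseteq> X" .
qed

lemma Fam_sym: "symmetric G \<phi> I Fam"
proof (rule sym_by[OF aI])
  fix \<delta> assume d: "\<delta> \<in> pstab G \<phi> a"
  show "veq (vact \<phi> \<delta> Fam) Fam"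
  proof (rule fix_Node)
    show "isSet Fam" unfolding Fam_def by simp
    fix u assume "u \<in> children Fam"
    then obtain n where "u = Af n" unfolding children_Fam by blast
    then show "veq (vact \<phi> \<delta> u) u" using Af_fix[OF d] by simp
  qed
qed

lemma Fam_sub: assumes "vsub s Fam" shows "symmetric G \<phi> I s"
proof -
  obtain u where u: "u \<in> children Fam" "s = u \<or> vsub s u" using assms vsub_iff by blast
  then obtain n where n: "u = Af n" unfolding children_Fam by blast
  show ?thesis
  proof (cases "s = u")
    case True then show ?thesis using n Af_sym by simp
  next
    case False then have "vsub s (Af n)" using u(2) n by simp
    then show ?thesis by (rule Af_sub_sym)
  qed
qed

lemma FamW: "inW G X \<phi> I Fam"
  unfolding inW_def atoms_in_iff using Fam_atoms Fam_sym Fam_sub by blast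

lemma Fam_mem: assumes "vmem A Fam" shows "isSet A \<and> (\<exists>y. vmem y A)"
proof -
  obtain n where e: "veq A (Af n)" using assms unfolding vmem_def children_Fam by blast
  have "isSet A" using isSet_veq[OF veq_sym[OF e] isSet_Af] .
  moreover have "vact \<phi> \<one>\<^bsub>G\<^esub> (e0 n) \<in> children (Af n)" unfolding children_Af using one_pstab[OF ga aX] by blast
  then have "vmem (vact \<phi> \<one>\<^bsub>G\<^esub> (e0 n)) A" using vmem_veq2[OF veq_sym[OF e] vmem_child] by blast
  ultimately show ?thesis by blast
qed

definition mm :: "nat \<Rightarrow> nat" where "mm k = (LEAST j. veq (Af j) (Af k))"

lemma mm: "veq (Af (mm k)) (Af k)"
  unfolding mm_def by (rule LeastI[of _ k]) (rule veq_refl)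

lemma mm_cong: assumes "veq (Af k) (Af k')" shows "mm k = mm k'"
proof -
  have "(\<lambda>j. veq (Af j) (Af k)) = (\<lambda>j. veq (Af j) (Af k'))"
  proof (intro ext iffI)
    fix j
    show "veq (Af j) (Af k) \<Longrightarrow> veq (Af j) (Af k')" using veq_trans assms by blast
    show "veq (Af j) (Af k') \<Longrightarrow> veq (Af j) (Af k)" using veq_trans veq_sym[OF assms] by blast
  qed
  then show ?thesis unfolding mm_def by simp
qed

definition gg :: "('x, 'i) vtree" where "gg = img \<nu> UNIV (\<lambda>k. kp (Af k) (vn \<nu> (mm k)))"

lemma children_gg: "children gg = (\<lambda>k. kp (Af k) (vn \<nu> (mm k))) ` UNIV"
  unfolding gg_def by (rule children_img[OF nu])

lemma ggmem: "vmem p gg \<Longrightarrow> \<exists>k. veq p (kp (Af k) (vn \<nu> (mm k)))"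
  unfolding vmem_def children_gg by blast

lemma ggW: "inW G X \<phi> I gg"
  unfolding inW_def atoms_in_iff
proof (intro conjI allI impI)
  have "atoms gg = \<Union> (atoms ` children gg)" unfolding gg_def by (rule atoms_img)
  also have "\<dots> \<subseteq> X" unfolding children_gg image_image atoms_kp[OF inf] atoms_vn[OF nu]
    by (rule UN_least) (simp add: Af_atoms)
  finally show "atoms gg \<subseteq> X" .
  have kfix: "\<And>\<delta> k. \<delta> \<in> pstab G \<phi> a \<Longrightarrow>
     veq (vact \<phi> \<delta> (up (Af k) (Af k))) (up (Af k) (Af k)) \<and>
     veq (vact \<phi> \<delta> (up (Af k) (vn \<nu> (mm k)))) (up (Af k) (vn \<nu> (mm k))) \<and>
     veq (vact \<phi> \<delta> (kp (Af k) (vn \<nu> (mm k)))) (kp (Af k) (vn \<nu> (mm k)))"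
    unfolding vact_kp vact_up vact_vn[OF nu] using Af_fix up_cong[OF inf] kp_cong[OF inf] veq_refl by metis
  show "symmetric G \<phi> I gg"
  proof (rule sym_by[OF aI])
    fix \<delta> assume d: "\<delta> \<in> pstab G \<phi> a"
    show "veq (vact \<phi> \<delta> gg) gg"
      by (rule fix_Node) (auto simp: gg_def children_gg[unfolded gg_def] intro: kfix[OF d, THEN conjunct2, THEN conjunct2])
  qed
  fix s assume "vsub s gg"
  then obtain u where u: "u \<in> children gg" "s = u \<or> vsub s u" using vsub_iff by blast
  then obtain k where k: "u = kp (Af k) (vn \<nu> (mm k))" unfolding children_gg by blast
  have vnsym: "\<And>s :: ('x, 'i) vtree. s = vn \<nu> (mm k) \<or> vsub s (vn \<nu> (mm k)) \<Longrightarrow> symmetric G \<phi> I s"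
  proof -
    fix s :: "('x, 'i) vtree" assume "s = vn \<nu> (mm k) \<or> vsub s (vn \<nu> (mm k))"
    then have "atoms s \<subseteq> {}"
    proof
      assume "s = vn \<nu> (mm k)" then show ?thesis using atoms_vn[OF nu] by simp
    next
      assume "vsub s (vn \<nu> (mm k))" then show ?thesis using atoms_vsub atoms_vn[OF nu] by metis
    qed
    then show "symmetric G \<phi> I s" by (rule sym_small[OF dyn_empty[OF dyn]])
  qed
  have "s = u \<or> s = up (Af k) (Af k) \<or> s = up (Af k) (vn \<nu> (mm k)) \<or> s = Af k \<or> s = vn \<nu> (mm k)
      \<or> vsub s (Af k) \<or> vsub s (vn \<nu> (mm k))"
    using u(2) vsub_kp[OF inf] unfolding k by blast
  then show "symmetric G \<phi> I s"
  proof (elim disjE)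
    assume "s = u" then show ?thesis using sym_by[OF aI] kfix k by metis
  next
    assume "s = up (Af k) (Af k)" then show ?thesis using sym_by[OF aI] kfix by metis
  next
    assume "s = up (Af k) (vn \<nu> (mm k))" then show ?thesis using sym_by[OF aI] kfix by metis
  next
    assume "s = Af k" then show ?thesis using Af_sym by blast
  qed (use vnsym Af_sub_sym in blast)+
qed

lemma gg_fun: "is_fun gg Fam"
  unfolding is_fun_def
proof (intro conjI allI impI)
  show "isSet gg" unfolding gg_def by simp
next
  fix p assume "vmem p gg"
  then obtain k where k: "veq p (kp (Af k) (vn \<nu> (mm k)))" using ggmem by blast
  have "is_kpair p (Af k) (vn \<nu> (mm k))" using k is_kpair_iff[OF inf] by blast
  moreover have "vmem (Af k) Fam" unfolding vmem_def children_Fam by blast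
  ultimately show "\<exists>a b. is_kpair p a b \<and> vmem a Fam" by blast
next
  fix x assume "vmem x Fam"
  then obtain k where k: "veq x (Af k)" unfolding vmem_def children_Fam by blast
  have "vmem (kp (Af k) (vn \<nu> (mm k))) gg" unfolding vmem_def children_gg by blast
  moreover have "is_kpair (kp (Af k) (vn \<nu> (mm k))) x (vn \<nu> (mm k))"
    using is_kpair_cong[OF inf is_kpair_kp[OF inf] veq_refl veq_sym[OF k] veq_refl] .
  ultimately show "\<exists>p b. vmem p gg \<and> is_kpair p x b" by blast
next
  fix p p' x y y' assume hh: "vmem p gg \<and> vmem p' gg \<and> is_kpair p x y \<and> is_kpair p' x y'"
  obtain k where k: "veq p (kp (Af k) (vn \<nu> (mm k)))" using hh ggmem by blast
  obtain k' where k': "veq p' (kp (Af k') (vn \<nu> (mm k')))" using hh ggmem by blast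
  have "veq (Af k) x \<and> veq (vn \<nu> (mm k)) y"
    using is_kpair_inj[OF inf] k is_kpair_iff[OF inf] hh by blast
  moreover have "veq (Af k') x \<and> veq (vn \<nu> (mm k')) y'"
    using is_kpair_inj[OF inf] k' is_kpair_iff[OF inf] hh by blast
  ultimately have "veq (Af k) (Af k')" "veq y (vn \<nu> (mm k))" "veq (vn \<nu> (mm k')) y'"
    using veq_trans veq_sym by metis+
  moreover have "mm k = mm k'" using mm_cong[OF \<open>veq (Af k) (Af k')\<close>] .
  ultimately show "veq y y'" using veq_trans by metis
qed

lemma Fam_count: "countable_in_W G X \<phi> I Fam"
  unfolding countable_in_W_def
proof (intro exI conjI allI impI)
  show "inW G X \<phi> I gg" by (rule ggW)
  show "is_omega (omg \<nu> :: ('x, 'i) vtree)" by (rule is_omega_omg[OF nu])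
  show "is_fun gg Fam" by (rule gg_fun)
next
  fix p x n assume hh: "vmem p gg \<and> is_kpair p x n"
  obtain k where k: "veq p (kp (Af k) (vn \<nu> (mm k)))" using hh ggmem by blast
  have "veq (vn \<nu> (mm k)) n" using is_kpair_inj[OF inf] k is_kpair_iff[OF inf] hh by blast
  moreover have "vmem (vn \<nu> (mm k)) (omg \<nu> :: ('x, 'i) vtree)"
    unfolding omg_def vmem_def children_img[OF nu] by blast
  ultimately show "vmem n (omg \<nu> :: ('x, 'i) vtree)" using vmem_veq1 by blast
next
  fix p p' x x' n assume hh: "vmem p gg \<and> vmem p' gg \<and> is_kpair p x n \<and> is_kpair p' x' n"
  obtain k where k: "veq p (kp (Af k) (vn \<nu> (mm k)))" using hh ggmem by blast
  obtain k' where k': "veq p' (kp (Af k') (vn \<nu> (mm k')))" using hh ggmem by blast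
  have 1: "veq (Af k) x \<and> veq (vn \<nu> (mm k)) n"
    using is_kpair_inj[OF inf] k is_kpair_iff[OF inf] hh by blast
  have 2: "veq (Af k') x' \<and> veq (vn \<nu> (mm k')) n"
    using is_kpair_inj[OF inf] k' is_kpair_iff[OF inf] hh by blast
  have "veq (vn \<nu> (mm k)) (vn \<nu> (mm k') :: ('x, 'i) vtree)" using 1 2 veq_trans veq_sym by metis
  then have "mm k = mm k'" by (rule vn_inj[OF nu])
  then have "veq (Af k) (Af k')" using mm[of k] mm[of k'] veq_trans veq_sym by metis
  then show "veq x x'" using 1 2 veq_trans veq_sym by metis
qed

end


context p2 begin

lemma Fam_props: "inW G X \<phi> I Fam \<and> isSet Fam \<and> countable_in_W G X \<phi> I Fam \<and>
    (\<forall>A. vmem A Fam \<longrightarrow> isSet A \<and> (\<exists>y. vmem y A))"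
  using FamW Fam_count Fam_mem by (simp add: Fam_def)

lemma final: "\<exists>\<gamma>. (\<forall>n. \<gamma> n \<in> pstab G \<phi> a) \<and> (\<Union>n. \<phi> (\<gamma> n) ` b n) \<in> I"
proof -
  obtain c where c: "inW G X \<phi> I c" "is_fun c Fam" "\<forall>p A y. vmem p c \<and> is_kpair p A y \<longrightarrow> vmem y A"
    using cc Fam_props unfolding countable_choice_W_def by blast
  from c(1) have "symmetric G \<phi> I c" unfolding inW_def by (elim conjE)
  then obtain d where d: "d \<in> I" "\<forall>\<delta>\<in>pstab G \<phi> d. veq (vact \<phi> \<delta> c) c"
    unfolding symmetric_iff by (elim bexE)
  have adI: "a \<union> d \<in> I" by (rule dyn_union[OF dyn aI d(1)])
  obtain c' where c': "c' \<in> I" "a \<union> d \<subseteq> c'" "definably_closed_set G X \<phi> c'"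
    using dc adI unfolding definably_closed_def by blast
  have cfun1: "\<forall>x. vmem x Fam \<longrightarrow> (\<exists>p y. vmem p c \<and> is_kpair p x y)"
    using c(2) unfolding is_fun_def by (elim conjE)
  have cfun2: "\<forall>p p' x y y'. vmem p c \<and> vmem p' c \<and> is_kpair p x y \<and> is_kpair p' x y' \<longrightarrow> veq y y'"
    using c(2) unfolding is_fun_def by (elim conjE)
  have ex: "\<forall>n. \<exists>\<gamma>. \<gamma> \<in> pstab G \<phi> a \<and> (\<exists>p y. vmem p c \<and> is_kpair p (Af n) y \<and> veq y (vact \<phi> \<gamma> (e0 n)))"
  proof
    fix n
    have "vmem (Af n) Fam" unfolding vmem_def children_Fam by blast
    then obtain p y where py: "vmem p c" "is_kpair p (Af n) y" using cfun1 by blast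
    then have "vmem y (Af n)" using c(3) by blast
    then obtain u where "u \<in> children (Af n)" "veq y u" unfolding vmem_def by blast
    then obtain \<gamma> where "\<gamma> \<in> pstab G \<phi> a" "veq y (vact \<phi> \<gamma> (e0 n))" unfolding children_Af by blast
    then show "\<exists>\<gamma>. \<gamma> \<in> pstab G \<phi> a \<and> (\<exists>p y. vmem p c \<and> is_kpair p (Af n) y \<and> veq y (vact \<phi> \<gamma> (e0 n)))"
      using py by blast
  qed
  then obtain \<gamma> where g: "\<And>n. \<gamma> n \<in> pstab G \<phi> a"
     "\<And>n. \<exists>p y. vmem p c \<and> is_kpair p (Af n) y \<and> veq y (vact \<phi> (\<gamma> n) (e0 n))"
    by metis
  have key: "\<phi> (\<gamma> n) ` b n \<subseteq> c'" for n
  proof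
    fix x assume "x \<in> \<phi> (\<gamma> n) ` b n"
    then obtain z where z: "z \<in> b n" "x = \<phi> (\<gamma> n) z" by blast
    have gc: "\<gamma> n \<in> carrier G" by (rule pstab_carrier[OF g(1)])
    have xX: "x \<in> X" using image_X[OF ga gc bX] z by blast
    show "x \<in> c'"
    proof (rule ccontr)
      assume "x \<notin> c'"
      then obtain \<delta> where de: "\<delta> \<in> pstab G \<phi> c'" "\<phi> \<delta> x \<noteq> x"
        using c'(3) xX unfolding definably_closed_set_def by blast
      have "pstab G \<phi> c' \<subseteq> pstab G \<phi> a" by (rule pstab_anti) (use c'(2) in blast)
      then have da: "\<delta> \<in> pstab G \<phi> a" using de(1) by blast
      have "pstab G \<phi> c' \<subseteq> pstab G \<phi> d" by (rule pstab_anti) (use c'(2) in blast)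
      then have dd: "\<delta> \<in> pstab G \<phi> d" using de(1) by blast
      obtain p y where py: "vmem p c" "is_kpair p (Af n) y" "veq y (vact \<phi> (\<gamma> n) (e0 n))" using g(2) by blast
      define E where "E = vact \<phi> (\<gamma> n) (e0 n)"
      have "vmem (vact \<phi> \<delta> p) (vact \<phi> \<delta> c)" by (rule vmem_vact[OF py(1)])
      then have vp: "vmem (vact \<phi> \<delta> p) c" using d(2) dd vmem_veq2 by blast
      have "is_kpair (vact \<phi> \<delta> p) (vact \<phi> \<delta> (Af n)) (vact \<phi> \<delta> y)" by (rule is_kpair_vact[OF inf py(2)])
      then have "is_kpair (vact \<phi> \<delta> p) (Af n) (vact \<phi> \<delta> y)"
        using is_kpair_cong[OF inf _ veq_refl Af_fix[OF da] veq_refl] by blast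
      then have yy: "veq y (vact \<phi> \<delta> y)" using cfun2 py(1,2) vp by blast
      have "veq (vact \<phi> \<delta> E) (vact \<phi> \<delta> y)" unfolding E_def by (rule veq_vact[OF veq_sym[OF py(3)]])
      then have "veq (vact \<phi> \<delta> E) y" using veq_trans veq_sym[OF yy] by blast
      then have eE: "veq (vact \<phi> \<delta> E) E" using veq_trans py(3) unfolding E_def by blast
      have "kp (ord z) (Atom (\<phi> (\<gamma> n) z)) \<in> children E"
        unfolding E_def children_vact_e0 using z(1) by blast
      then have "vact \<phi> \<delta> (kp (ord z) (Atom (\<phi> (\<gamma> n) z))) \<in> children (vact \<phi> \<delta> E)"
        unfolding children_vact by blast
      then have "kp (ord z) (Atom (\<phi> \<delta> x)) \<in> children (vact \<phi> \<delta> E)"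
        unfolding vact_kp vact_ord z(2) by simp
      then have "vmem (kp (ord z) (Atom (\<phi> \<delta> x))) E" using vmem_veq2[OF eE vmem_child] by blast
      then obtain v where v: "v \<in> children E" "veq (kp (ord z) (Atom (\<phi> \<delta> x))) v" unfolding vmem_def by blast
      have "v \<in> (\<lambda>x. kp (ord x) (Atom (\<phi> (\<gamma> n) x))) ` b n"
        using v(1) unfolding E_def children_vact_e0 .
      then obtain z' where z': "v = kp (ord z') (Atom (\<phi> (\<gamma> n) z'))" "z' \<in> b n"
        by (elim imageE)
      have "veq (ord z) (ord z') \<and> veq (Atom (\<phi> \<delta> x)) (Atom (\<phi> (\<gamma> n) z'))"
        using kp_inj[OF inf, of "ord z" "Atom (\<phi> \<delta> x)" "ord z'" "Atom (\<phi> (\<gamma> n) z')"] v(2) z'(1)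
        by simp
      then have "z = z'" "\<phi> \<delta> x = \<phi> (\<gamma> n) z'" using ord_inj by auto
      then show False using de(2) z(2) by simp
    qed
  qed
  have "(\<Union>n. \<phi> (\<gamma> n) ` b n) \<subseteq> c'" using key by blast
  then have "(\<Union>n. \<phi> (\<gamma> n) ` b n) \<in> I" by (rule dyn_subset[OF dyn c'(1)])
  then show ?thesis using g(1) by blast
qed

end

lemma part2:
  fixes G :: "('g, 'm) monoid_scheme" and X :: "'x set" and \<phi> :: "'g \<Rightarrow> 'x \<Rightarrow> 'x"
    and I :: "'x set set"
  assumes dyn: "dyn_ideal G X \<phi> I" and inf: "infinite (UNIV :: 'i set)"
    and e: "\<exists>e :: 'x set set \<Rightarrow> 'i. inj e"
    and dc: "definably_closed G X \<phi> I" and cc: "countable_choice_W TYPE('i) G X \<phi> I"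
  shows "sigma_complete G \<phi> I"
  unfolding sigma_complete_def
proof (intro ballI allI impI)
  fix a b assume aI: "a \<in> I" and bI: "\<forall>n. (b :: nat \<Rightarrow> 'x set) n \<in> I"
  obtain e :: "'x set set \<Rightarrow> 'i" where ei: "inj e" using e by blast
  obtain \<nu> :: "nat \<Rightarrow> 'i" where nu: "inj \<nu>" using infinite_countable_subset[OF inf] by blast
  define \<iota> where "\<iota> x = e {{x}}" for x :: 'x
  have io: "inj \<iota>"
  proof (rule injI)
    fix x y assume "\<iota> x = \<iota> y"
    then have "{{x}} = {{y}}" unfolding \<iota>_def using ei by (simp add: inj_eq)
    then show "x = y" by simp
  qed
  obtain h :: "('x \<Rightarrow> 'x) \<Rightarrow> 'i" where hi: "inj h" using fun_inj_i[OF inf ei] by blast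
  obtain r :: "'x rel" where r: "well_order_on UNIV r" using well_order_on by blast
  have wfR: "wf (r - Id)" using r unfolding well_order_on_def by blast
  have tot: "\<forall>x y. x \<noteq> y \<longrightarrow> (x, y) \<in> r - Id \<or> (y, x) \<in> r - Id"
    using r unfolding well_order_on_def linear_order_on_def total_on_def by blast
  interpret p2 G X \<phi> I a b \<nu> \<iota> h "r - Id"
    by (unfold_locales) (use dyn inf nu io hi wfR tot aI bI dc cc in auto)
  show "\<exists>\<gamma>. (\<forall>n. \<gamma> n \<in> pstab G \<phi> a) \<and> (\<Union>n. \<phi> (\<gamma> n) ` b n) \<in> I"
    by (rule final)
qed

theorem mainTheorem10:
  fixes G :: "('g, 'm) monoid_scheme" and X :: "'x set" and \<phi> :: "'g \<Rightarrow> 'x \<Rightarrow> 'x"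
    and I :: "'x set set"
  assumes "dyn_ideal G X \<phi> I"
    and "infinite (UNIV :: 'i set)"
    and "\<exists>e :: 'x set set \<Rightarrow> 'i. inj e"
  shows "(sigma_complete G \<phi> I \<longrightarrow> countable_choice_W TYPE('i) G X \<phi> I)
       \<and> (definably_closed G X \<phi> I \<and> countable_choice_W TYPE('i) G X \<phi> I
            \<longrightarrow> sigma_complete G \<phi> I)"
  using part1[OF assms(1,2)] part2[OF assms(1,2,3)] by blast


end
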